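(* Let $p$ be an odd prime and $P$ a finite $p$-group of class $2$ and exponent $p$. If $\mathcal{H}$ and $\mathcal{K}$ are two fully refined central decompositions of $P$ such that $\{HZ(P) : H\in\mathcal{H}\}=\{KZ(P): K\in\mathcal{K}\}$, then $\mathcal{H}$ and $\mathcal{K}$ are exchangeable.
   Context: A central decomposition of a group $G$ is a set $\mathcal{H}$ of subgroups of $G$ such that distinct members commute elementwise, $G$ is generated by $\mathcal{H}$, and no proper subset of $\mathcal{H}$ generates $G$. A group is centrally indecomposable if its only central decomposition is $\{G\}$; a central decomposition is fully refined if all its members are centrally indecomposable. Two central decompositions $\mathcal{H}$ and $\mathcal{K}$ of $G$ are exchangeable if for each subset $\mathcal{J}\subseteq\mathcal{H}$ there is $\alpha\in\operatorname{Aut}G$ such that $\mathcal{J}\alpha\subseteq\mathcal{K}$ and $(\mathcal{H}-\mathcal{J})\alpha=\mathcal{H}-\mathcal{J}$, where $\mathcal{J}\alpha=\{J\alpha: J\in\mathcal{J}\}$. *)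

theory Defs
  imports "HOL-Algebra.Algebra"
begin

definition group_center :: "('a, 'b) monoid_scheme \<Rightarrow> 'a set" where
  "group_center G = {z \<in> carrier G. \<forall>x \<in> carrier G. z \<otimes>\<^bsub>G\<^esub> x = x \<otimes>\<^bsub>G\<^esub> z}"

definition central_decomposition :: "('a, 'b) monoid_scheme \<Rightarrow> 'a set set \<Rightarrow> bool" where
  "central_decomposition G \<H> \<longleftrightarrow>
     (\<forall>H \<in> \<H>. subgroup H G) \<and>
     (\<forall>H \<in> \<H>. \<forall>K \<in> \<H>. H \<noteq> K \<longrightarrow>
        (\<forall>x \<in> H. \<forall>y \<in> K. x \<otimes>\<^bsub>G\<^esub> y = y \<otimes>\<^bsub>G\<^esub> x)) \<and>
     generate G (\<Union>\<H>) = carrier G \<and>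
     (\<forall>\<J>. \<J> \<subset> \<H> \<longrightarrow> generate G (\<Union>\<J>) \<noteq> carrier G)"

definition centrally_indecomposable :: "('a, 'b) monoid_scheme \<Rightarrow> 'a set \<Rightarrow> bool" where
  "centrally_indecomposable G H \<longleftrightarrow>
     (\<forall>\<H>. central_decomposition (G\<lparr>carrier := H\<rparr>) \<H> \<longleftrightarrow> \<H> = {H})"

definition fully_refined :: "('a, 'b) monoid_scheme \<Rightarrow> 'a set set \<Rightarrow> bool" where
  "fully_refined G \<H> \<longleftrightarrow>
     central_decomposition G \<H> \<and> (\<forall>H \<in> \<H>. centrally_indecomposable G H)"

definition exchangeable :: "('a, 'b) monoid_scheme \<Rightarrow> 'a set set \<Rightarrow> 'a set set \<Rightarrow> bool" where
  "exchangeable G \<H> \<K> \<longleftrightarrow>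
     (\<forall>\<J>. \<J> \<subseteq> \<H> \<longrightarrow>
        (\<exists>\<alpha> \<in> iso G G. (\<lambda>J. \<alpha> ` J) ` \<J> \<subseteq> \<K> \<and>
                         (\<lambda>J. \<alpha> ` J) ` (\<H> - \<J>) = \<H> - \<J>))"

definition nilpotent_class_two :: "('a, 'b) monoid_scheme \<Rightarrow> bool" where
  "nilpotent_class_two G \<longleftrightarrow>
     derived G (carrier G) \<subseteq> group_center G \<and> group_center G \<noteq> carrier G"

definition has_exponent :: "('a, 'b) monoid_scheme \<Rightarrow> nat \<Rightarrow> bool" where
  "has_exponent G p \<longleftrightarrow>
     (\<forall>x \<in> carrier G. x [^]\<^bsub>G\<^esub> p = \<one>\<^bsub>G\<^esub>) \<and> carrier G \<noteq> {\<one>\<^bsub>G\<^esub>}"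

end

theory Submission
  imports Defs
begin

context group
begin

lemma comm_inv:
  assumes a: "a \<in> carrier G" and s: "s \<in> carrier G" and e: "a \<otimes> s = s \<otimes> a"
  shows "inv a \<otimes> s = s \<otimes> inv a"
proof -
  have "inv a \<otimes> s = inv a \<otimes> s \<otimes> (a \<otimes> inv a)" using a s by simp
  also have "\<dots> = inv a \<otimes> (s \<otimes> a) \<otimes> inv a" using a s by (simp add: m_assoc)
  also have "\<dots> = inv a \<otimes> (a \<otimes> s) \<otimes> inv a" using e by simp
  also have "\<dots> = s \<otimes> inv a" using a s by (simp add: m_assoc[symmetric])
  finally show ?thesis .
qed

definition cent :: "'a set \<Rightarrow> 'a set" where
  "cent S = {x \<in> carrier G. \<forall>s\<in>S. x \<otimes> s = s \<otimes> x}"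

lemma cent_subgroup: assumes "S \<subseteq> carrier G" shows "subgroup (cent S) G"
proof (rule subgroupI)
  show "cent S \<subseteq> carrier G" by (auto simp: cent_def)
  show "cent S \<noteq> {}" using assms by (auto simp: cent_def intro!: exI[of _ \<one>])
next
  fix a assume a: "a \<in> cent S"
  show "inv a \<in> cent S" unfolding cent_def
  proof (safe)
    show "inv a \<in> carrier G" using a by (auto simp: cent_def)
    fix s assume s: "s \<in> S"
    have ac: "a \<in> carrier G" and e: "a \<otimes> s = s \<otimes> a" using a s by (auto simp: cent_def)
    have sc: "s \<in> carrier G" using s assms by auto
    show "inv a \<otimes> s = s \<otimes> inv a" using comm_inv[OF ac sc e] .
  qed
next
  fix a b assume a: "a \<in> cent S" and b: "b \<in> cent S"
  show "a \<otimes> b \<in> cent S" unfolding cent_def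
  proof safe
    show "a \<otimes> b \<in> carrier G" using a b by (auto simp: cent_def)
    fix s assume s: "s \<in> S"
    have ac: "a \<in> carrier G" and e: "a \<otimes> s = s \<otimes> a" using a s by (auto simp: cent_def)
    have bc: "b \<in> carrier G" and f: "b \<otimes> s = s \<otimes> b" using b s by (auto simp: cent_def)
    have sc: "s \<in> carrier G" using s assms by auto
    have "a \<otimes> b \<otimes> s = a \<otimes> (s \<otimes> b)" using ac bc sc f by (simp add: m_assoc)
    also have "\<dots> = s \<otimes> (a \<otimes> b)" using ac bc sc e by (simp add: m_assoc[symmetric])
    finally show "a \<otimes> b \<otimes> s = s \<otimes> (a \<otimes> b)" .
  qed
qed

lemma set_multI: "h \<in> H \<Longrightarrow> k \<in> K \<Longrightarrow> h \<otimes> k \<in> H <#> K"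
  unfolding set_mult_def by blast

lemma set_multE: "x \<in> H <#> K \<Longrightarrow> (\<And>h k. h \<in> H \<Longrightarrow> k \<in> K \<Longrightarrow> x = h \<otimes> k \<Longrightarrow> P) \<Longrightarrow> P"
  unfolding set_mult_def by blast

lemma comm_gen:
  assumes "S \<subseteq> carrier G" "T \<subseteq> carrier G" "\<forall>s\<in>S. \<forall>t\<in>T. s \<otimes> t = t \<otimes> s"
    and "x \<in> S" "y \<in> generate G T"
  shows "x \<otimes> y = y \<otimes> x"
proof -
  have "T \<subseteq> cent S" using assms(1-3) by (auto simp: cent_def)
  hence "generate G T \<subseteq> cent S" using generate_subgroup_incl cent_subgroup[OF assms(1)] by blast
  thus ?thesis using assms(4,5) by (auto simp: cent_def)
qed

lemma comm_gen2:
  assumes "S \<subseteq> carrier G" "T \<subseteq> carrier G" "\<forall>s\<in>S. \<forall>t\<in>T. s \<otimes> t = t \<otimes> s"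
    and "x \<in> generate G S" "y \<in> generate G T"
  shows "x \<otimes> y = y \<otimes> x"
proof -
  have "\<forall>t\<in>generate G T. \<forall>s\<in>S. t \<otimes> s = s \<otimes> t"
    using comm_gen[OF assms(1-3)] by metis
  hence "y \<otimes> x = x \<otimes> y" using comm_gen[OF generate_incl[OF assms(2)] assms(1)] assms(4,5) by blast
  thus ?thesis by simp
qed

lemma centerI:
  assumes "generate G XX = carrier G" "XX \<subseteq> carrier G" "x \<in> carrier G" "\<forall>y\<in>XX. x \<otimes> y = y \<otimes> x"
  shows "x \<in> group_center G"
proof -
  have "XX \<subseteq> cent {x}" using assms by (auto simp: cent_def)
  hence "generate G XX \<subseteq> cent {x}" using generate_subgroup_incl cent_subgroup assms(3) by blast
  thus ?thesis using assms(1,3) by (auto simp: cent_def group_center_def)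
qed

lemma center_eq: "group_center G = cent (carrier G)"
  by (auto simp: cent_def group_center_def)

lemma center_subgroup: "subgroup (group_center G) G"
  using center_eq cent_subgroup by simp

lemma center_carrier: "group_center G \<subseteq> carrier G"
  by (auto simp: group_center_def)

lemma center_comm: "z \<in> group_center G \<Longrightarrow> x \<in> carrier G \<Longrightarrow> z \<otimes> x = x \<otimes> z"
  by (auto simp: group_center_def)

lemma prod_subgroup:
  assumes H: "subgroup H G" and K: "subgroup K G" and c: "\<forall>h\<in>H. \<forall>k\<in>K. h \<otimes> k = k \<otimes> h"
  shows "subgroup (H <#> K) G"
proof (rule subgroupI)
  have Hc: "H \<subseteq> carrier G" and Kc: "K \<subseteq> carrier G" using H K subgroup.subset by auto
  show "H <#> K \<subseteq> carrier G" using Hc Kc by (auto elim!: set_multE)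
  show "H <#> K \<noteq> {}" using set_multI[OF subgroup.one_closed[OF H] subgroup.one_closed[OF K]] by blast
next
  have Hc: "H \<subseteq> carrier G" and Kc: "K \<subseteq> carrier G" using H K subgroup.subset by auto
  fix a assume "a \<in> H <#> K"
  then obtain h k where hk: "h \<in> H" "k \<in> K" "a = h \<otimes> k" by (auto elim!: set_multE)
  have hkc: "h \<in> carrier G" "k \<in> carrier G" using hk Hc Kc by auto
  have "inv a = inv k \<otimes> inv h" using hkc hk by (simp add: inv_mult_group)
  also have "\<dots> = inv h \<otimes> inv k" using c hk subgroup.m_inv_closed[OF H] subgroup.m_inv_closed[OF K] by metis
  finally show "inv a \<in> H <#> K" using set_multI subgroup.m_inv_closed[OF H] subgroup.m_inv_closed[OF K] hk by metis
next
  have Hc: "H \<subseteq> carrier G" and Kc: "K \<subseteq> carrier G" using H K subgroup.subset by auto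
  fix a b assume "a \<in> H <#> K" "b \<in> H <#> K"
  then obtain h k h' k' where hk: "h \<in> H" "k \<in> K" "a = h \<otimes> k" "h' \<in> H" "k' \<in> K" "b = h' \<otimes> k'"
    by (auto elim!: set_multE)
  have hc: "h \<in> carrier G" "h' \<in> carrier G" "k \<in> carrier G" "k' \<in> carrier G" using hk Hc Kc by auto
  have "a \<otimes> b = h \<otimes> (k \<otimes> h') \<otimes> k'" using hc hk by (simp add: m_assoc)
  also have "\<dots> = h \<otimes> (h' \<otimes> k) \<otimes> k'" using c hk by metis
  also have "\<dots> = (h \<otimes> h') \<otimes> (k \<otimes> k')" using hc by (simp add: m_assoc)
  finally show "a \<otimes> b \<in> H <#> K"
    using set_multI subgroup.m_closed[OF H] subgroup.m_closed[OF K] hk by metis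
qed

lemma gen_union:
  assumes H: "subgroup H G" and K: "subgroup K G" and c: "\<forall>h\<in>H. \<forall>k\<in>K. h \<otimes> k = k \<otimes> h"
  shows "generate G (H \<union> K) = H <#> K"
proof
  have Hc: "H \<subseteq> carrier G" and Kc: "K \<subseteq> carrier G" using H K subgroup.subset by auto
  have "H \<union> K \<subseteq> H <#> K"
  proof
    fix x assume "x \<in> H \<union> K"
    then show "x \<in> H <#> K"
    proof
      assume "x \<in> H" then show ?thesis using set_multI[of x H \<one> K] subgroup.one_closed[OF K] Hc by auto
    next
      assume "x \<in> K" then show ?thesis using set_multI[of \<one> H x K] subgroup.one_closed[OF H] Kc by auto
    qed
  qed
  then show "generate G (H \<union> K) \<subseteq> H <#> K"
    using generate_subgroup_incl prod_subgroup[OF H K c] by blast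
  show "H <#> K \<subseteq> generate G (H \<union> K)"
  proof
    fix x assume "x \<in> H <#> K"
    then obtain h k where "h \<in> H" "k \<in> K" "x = h \<otimes> k" by (auto elim!: set_multE)
    then show "x \<in> generate G (H \<union> K)"
      using generate.eng[OF generate.incl[of h] generate.incl[of k]] by blast
  qed
qed

lemma cd_split:
  assumes "central_decomposition G \<A>" "A \<in> \<A>"
  defines "N \<equiv> generate G (\<Union>(\<A> - {A}))"
  shows "subgroup N G" "\<forall>a\<in>A. \<forall>n\<in>N. a \<otimes>\<^bsub>G\<^esub> n = n \<otimes>\<^bsub>G\<^esub> a"
    "A <#>\<^bsub>G\<^esub> N = carrier G" "N \<noteq> carrier G" "subgroup A G"
proof -
  have subs: "\<forall>H\<in>\<A>. subgroup H G" and com: "\<forall>H\<in>\<A>. \<forall>K\<in>\<A>. H \<noteq> K \<longrightarrow> (\<forall>x\<in>H. \<forall>y\<in>K. x \<otimes> y = y \<otimes> x)"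
    and gen: "generate G (\<Union>\<A>) = carrier G" and mini: "\<forall>\<J>. \<J> \<subset> \<A> \<longrightarrow> generate G (\<Union>\<J>) \<noteq> carrier G"
    using assms(1) unfolding central_decomposition_def by auto
  have Uc: "\<Union>(\<A> - {A}) \<subseteq> carrier G" using subs subgroup.subset by blast
  show NS: "subgroup N G" unfolding N_def using generate_is_subgroup[OF Uc] .
  show AS: "subgroup A G" using subs assms(2) by auto
  have Ac: "A \<subseteq> carrier G" using AS subgroup.subset by auto
  show c: "\<forall>a\<in>A. \<forall>n\<in>N. a \<otimes> n = n \<otimes> a"
  proof (intro ballI)
    fix a n assume a: "a \<in> A" and n: "n \<in> N"
    show "a \<otimes> n = n \<otimes> a"
    proof (rule comm_gen[OF Ac Uc _ a n[unfolded N_def]])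
      show "\<forall>s\<in>A. \<forall>t\<in>\<Union>(\<A> - {A}). s \<otimes> t = t \<otimes> s"
      proof (intro ballI)
        fix s t assume s: "s \<in> A" and t: "t \<in> \<Union>(\<A> - {A})"
        then obtain B where B: "B \<in> \<A>" "B \<noteq> A" "t \<in> B" by blast
        show "s \<otimes> t = t \<otimes> s" using com assms(2) B s by metis
      qed
    qed
  qed
  have "\<Union>\<A> \<subseteq> A \<union> N"
  proof
    fix x assume "x \<in> \<Union>\<A>"
    then obtain B where "B \<in> \<A>" "x \<in> B" by blast
    then show "x \<in> A \<union> N" unfolding N_def using generate.incl[of x "\<Union>(\<A> - {A})" G] by (cases "B = A") auto
  qed
  hence "carrier G \<subseteq> generate G (A \<union> N)" using gen mono_generate by blast
  also have "\<dots> = A <#> N" using gen_union[OF AS NS c] .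
  finally show "A <#> N = carrier G" using prod_subgroup[OF AS NS c] subgroup.subset by blast
  have "\<A> - {A} \<subset> \<A>" using assms(2) by blast
  then show "N \<noteq> carrier G" unfolding N_def using mini by blast
qed

end

lemma (in group) sub_pow_closed:
  assumes "subgroup S G" "x \<in> S" shows "x [^] (n::nat) \<in> S"
  by (induct n) (use assms subgroup.one_closed subgroup.m_closed in auto)

locale expgroup = group G for G (structure) +
  fixes p :: nat
  assumes prime: "Factorial_Ring.prime p"
    and expo: "\<forall>x\<in>carrier G. x [^] p = \<one>"
    and fin: "finite (carrier G)"
begin

definition cyc :: "'a \<Rightarrow> 'a set" where
  "cyc x = {x [^] (i::nat) | i. True}"

lemma cyc_mem: "x [^] (i::nat) \<in> cyc x" by (auto simp: cyc_def)

lemma self_cyc: "x \<in> carrier G \<Longrightarrow> x \<in> cyc x"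
  using cyc_mem[of x "1"] by simp

lemma cycE: "y \<in> cyc x \<Longrightarrow> (\<And>i::nat. y = x [^] i \<Longrightarrow> P) \<Longrightarrow> P"
  by (auto simp: cyc_def)

lemma pow_p_mult: "x \<in> carrier G \<Longrightarrow> x [^] (p * k) = \<one>"
  using nat_pow_pow[of x p k, symmetric] expo by simp

lemma cyc_subgroup: assumes x: "x \<in> carrier G" shows "subgroup (cyc x) G"
proof (rule subgroupI)
  show "cyc x \<subseteq> carrier G" using x by (auto simp: cyc_def)
  show "cyc x \<noteq> {}" using cyc_mem by blast
next
  fix a assume "a \<in> cyc x"
  then obtain i where a: "a = x [^] (i::nat)" by (auto elim: cycE)
  have "x [^] i \<otimes> x [^] (i * (p - 1)) = \<one>"
  proof -
    have "x [^] i \<otimes> x [^] (i * (p - 1)) = x [^] (i + i * (p - 1))" using x nat_pow_mult by simp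
    also have "i + i * (p - 1) = p * i" using prime prime_gt_0_nat[of p]
      by (simp add: algebra_simps)
    finally show ?thesis using pow_p_mult x by simp
  qed
  hence "inv a = x [^] (i * (p - 1))" using a x inv_comm inv_equality by (metis nat_pow_closed)
  then show "inv a \<in> cyc x" using cyc_mem by simp
next
  fix a b assume "a \<in> cyc x" "b \<in> cyc x"
  then obtain i j where "a = x [^] (i::nat)" "b = x [^] (j::nat)" by (meson cycE)
  then show "a \<otimes> b \<in> cyc x" using x nat_pow_mult cyc_mem by simp
qed

lemma cyc_comm: "x \<in> carrier G \<Longrightarrow> a \<in> cyc x \<Longrightarrow> b \<in> cyc x \<Longrightarrow> a \<otimes> b = b \<otimes> a"
  by (auto elim!: cycE simp: nat_pow_comm)

lemma cop_pow:
  assumes x: "x \<in> carrier G" and S: "subgroup S G" and xi: "x [^] (i::nat) \<in> S" and nd: "\<not> p dvd i"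
  shows "x \<in> S"
proof -
  have i0: "i \<noteq> 0" using nd by (metis dvd_0_right)
  obtain a b where ab: "i * a = p * b + gcd i p" using bezout_nat[OF i0] by blast
  have "coprime i p" using prime_imp_coprime[OF prime nd] by (simp add: coprime_commute)
  hence "gcd i p = 1" by simp
  hence "x [^] (i * a) = x [^] (p * b) \<otimes> x" using ab x nat_pow_mult[of x "p*b" 1] by simp
  also have "\<dots> = x" using pow_p_mult x by simp
  finally have "x = (x [^] i) [^] a" using x nat_pow_pow by simp
  thus ?thesis using sub_pow_closed[OF S xi, of a] by simp
qed

lemma pow_one_dvd:
  assumes x: "x \<in> carrier G" "x \<noteq> \<one>" and e: "x [^] (i::nat) = \<one>" shows "p dvd i"
  using cop_pow[OF x(1) triv_subgroup, of i] e x(2) by auto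

lemma pow_mod: assumes x: "x \<in> carrier G" shows "x [^] (i::nat) = x [^] (i mod p)"
proof -
  have "x [^] i = x [^] (p * (i div p) + i mod p)" by simp
  also have "\<dots> = x [^] (p * (i div p)) \<otimes> x [^] (i mod p)" using x nat_pow_mult by simp
  finally show ?thesis using pow_p_mult x by simp
qed

lemma finite_subgroups: "finite {M. subgroup M G \<and> P M}"
proof -
  have "{M. subgroup M G \<and> P M} \<subseteq> Pow (carrier G)" using subgroup.subset by blast
  thus ?thesis using fin finite_subset by blast
qed

lemma prod_subgroup_norm:
  assumes M: "subgroup M G" and L: "subgroup L G" and n: "\<forall>l\<in>L. \<forall>m\<in>M. l \<otimes> m \<otimes> inv l \<in> M"
  shows "subgroup (M <#> L) G"
proof (rule subgroupI)
  have Mc: "M \<subseteq> carrier G" and Lc: "L \<subseteq> carrier G" using M L subgroup.subset by auto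
  show "M <#> L \<subseteq> carrier G" using Mc Lc by (auto elim!: set_multE)
  show "M <#> L \<noteq> {}" using set_multI[OF subgroup.one_closed[OF M] subgroup.one_closed[OF L]] by blast
next
  have Mc: "M \<subseteq> carrier G" and Lc: "L \<subseteq> carrier G" using M L subgroup.subset by auto
  fix a assume "a \<in> M <#> L"
  then obtain m l where ml: "m \<in> M" "l \<in> L" "a = m \<otimes> l" by (auto elim!: set_multE)
  have c: "m \<in> carrier G" "l \<in> carrier G" using ml Mc Lc by auto
  have "inv a = inv l \<otimes> inv m" using c ml by (simp add: inv_mult_group)
  also have "\<dots> = (inv l \<otimes> inv m \<otimes> inv (inv l)) \<otimes> inv l" using c by (simp add: m_assoc)
  finally show "inv a \<in> M <#> L"
    using set_multI n subgroup.m_inv_closed[OF M] subgroup.m_inv_closed[OF L] ml by metis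
next
  have Mc: "M \<subseteq> carrier G" and Lc: "L \<subseteq> carrier G" using M L subgroup.subset by auto
  fix a b assume "a \<in> M <#> L" "b \<in> M <#> L"
  then obtain m l m' l' where ml: "m \<in> M" "l \<in> L" "a = m \<otimes> l" "m' \<in> M" "l' \<in> L" "b = m' \<otimes> l'"
    by (auto elim!: set_multE)
  have c: "m \<in> carrier G" "l \<in> carrier G" "m' \<in> carrier G" "l' \<in> carrier G" using ml Mc Lc by auto
  have "a \<otimes> b = (m \<otimes> (l \<otimes> m' \<otimes> inv l)) \<otimes> (l \<otimes> l')" using c ml by (simp add: m_assoc) (simp add: m_assoc[symmetric])
  then show "a \<otimes> b \<in> M <#> L"
    using set_multI n subgroup.m_closed[OF M] subgroup.m_closed[OF L] ml by metis
qed

end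

lemma (in group) pow_comm:
  assumes "a \<in> carrier G" "b \<in> carrier G" "a \<otimes> b = b \<otimes> a"
  shows "a [^] (i::nat) \<otimes> b = b \<otimes> a [^] i"
proof -
  have "a \<in> cent {b}" using assms by (auto simp: cent_def)
  hence "a [^] i \<in> cent {b}" using sub_pow_closed cent_subgroup assms(2) by blast
  thus ?thesis by (auto simp: cent_def)
qed

context expgroup
begin

lemma pow_dvd_one: "x \<in> carrier G \<Longrightarrow> p dvd i \<Longrightarrow> x [^] (i::nat) = \<one>"
  using pow_p_mult by (auto elim!: dvdE)

lemma elem_complement:
  assumes H: "subgroup H G" and D: "subgroup D G" and DH: "D \<subseteq> H" and z: "z \<in> H" and zD: "z \<notin> D"
    and comm: "\<forall>x\<in>H. \<forall>y\<in>H. x \<otimes> y \<otimes> inv x \<otimes> inv y \<in> D"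
    and zc: "\<forall>y\<in>H. z \<otimes> y = y \<otimes> z"
  shows "\<exists>M. subgroup M G \<and> D \<subseteq> M \<and> M \<subseteq> H \<and> z \<notin> M \<and> M <#> cyc z = H"
proof -
  define F where "F = {M. subgroup M G \<and> (D \<subseteq> M \<and> M \<subseteq> H \<and> z \<notin> M)}"
  have finF: "finite F" unfolding F_def by (rule finite_subgroups)
  have "D \<in> F" unfolding F_def using D DH zD by auto
  then obtain M where MF: "M \<in> F" and mx: "\<forall>b\<in>F. M \<le> b \<longrightarrow> M = b"
    using finite_has_maximal[OF finF] by blast
  have M: "subgroup M G" and DM: "D \<subseteq> M" and MH: "M \<subseteq> H" and zM: "z \<notin> M" using MF unfolding F_def by auto
  have Hc: "H \<subseteq> carrier G" using H subgroup.subset by auto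
  have zC: "z \<in> carrier G" using z Hc by auto
  have cycH: "\<And>x. x \<in> H \<Longrightarrow> cyc x \<subseteq> H"
    using H sub_pow_closed by (auto elim!: cycE)
  have norm: "\<forall>y\<in>H. \<forall>m\<in>M. y \<otimes> m \<otimes> inv y \<in> M"
  proof (intro ballI)
    fix y m assume y: "y \<in> H" and m: "m \<in> M"
    have yc: "y \<in> carrier G" and mc: "m \<in> carrier G" using y m MH Hc by auto
    have "y \<otimes> m \<otimes> inv y = (y \<otimes> m \<otimes> inv y \<otimes> inv m) \<otimes> m" using yc mc by (simp add: m_assoc)
    moreover have "y \<otimes> m \<otimes> inv y \<otimes> inv m \<in> M" using comm y m MH DM by blast
    ultimately show "y \<otimes> m \<otimes> inv y \<in> M" using subgroup.m_closed[OF M] m by metis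
  qed
  have zcom: "\<forall>m\<in>M. \<forall>c\<in>cyc z. m \<otimes> c = c \<otimes> m"
  proof (intro ballI)
    fix m c assume m: "m \<in> M" and c: "c \<in> cyc z"
    then obtain i where ci: "c = z [^] (i::nat)" by (meson cycE)
    have mc: "m \<in> carrier G" using m MH Hc by auto
    show "m \<otimes> c = c \<otimes> m" using pow_comm[OF zC mc, of i] zc m MH ci by auto
  qed
  have S: "subgroup (M <#> cyc z) G" using prod_subgroup[OF M cyc_subgroup[OF zC] zcom] .
  have SH: "M <#> cyc z \<subseteq> H" using MH cycH[OF z] subgroup.m_closed[OF H] by (auto elim!: set_multE)
  have "H \<subseteq> M <#> cyc z"
  proof (rule ccontr)
    assume "\<not> H \<subseteq> M <#> cyc z"
    then obtain x where x: "x \<in> H" "x \<notin> M <#> cyc z" by blast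
    have xC: "x \<in> carrier G" using x Hc by auto
    have L: "\<forall>l\<in>cyc x. \<forall>m\<in>M. l \<otimes> m \<otimes> inv l \<in> M" using norm cycH[OF x(1)] by blast
    have M': "subgroup (M <#> cyc x) G" using prod_subgroup_norm[OF M cyc_subgroup[OF xC] L] .
    have MM': "M \<subseteq> M <#> cyc x"
    proof
      fix m assume m: "m \<in> M"
      have "m = m \<otimes> x [^] (0::nat)" using m MH Hc by auto
      thus "m \<in> M <#> cyc x" using set_multI[OF m cyc_mem] by metis
    qed
    have M'H: "M <#> cyc x \<subseteq> H" using MH cycH[OF x(1)] subgroup.m_closed[OF H] by (auto elim!: set_multE)
    have zM': "z \<notin> M <#> cyc x"
    proof
      assume "z \<in> M <#> cyc x"
      then obtain m c where mc: "m \<in> M" "c \<in> cyc x" "z = m \<otimes> c" by (auto elim!: set_multE)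
      then obtain i where ci: "c = x [^] (i::nat)" by (meson cycE)
      have mC: "m \<in> carrier G" using mc MH Hc by auto
      show False
      proof (cases "p dvd i")
        case True
        hence "c = \<one>" using ci pow_dvd_one xC by simp
        thus False using mc zM mC by simp
      next
        case False
        have "c = inv m \<otimes> z" using mc mC ci xC by (simp add: m_assoc[symmetric])
        hence "c \<in> M <#> cyc z" using set_multI[OF subgroup.m_inv_closed[OF M mc(1)] self_cyc[OF zC]] by simp
        hence "x \<in> M <#> cyc z" using cop_pow[OF xC S _ False] ci by simp
        thus False using x by simp
      qed
    qed
    have "M <#> cyc x \<in> F" unfolding F_def using M' DM MM' M'H zM' by auto
    hence "M = M <#> cyc x" using mx MM' by auto
    moreover have "x \<in> M <#> cyc x" using set_multI[OF subgroup.one_closed[OF M] self_cyc[OF xC]] xC by simp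
    moreover have "M \<subseteq> M <#> cyc z"
    proof
      fix m assume m: "m \<in> M"
      have "m = m \<otimes> z [^] (0::nat)" using m MH Hc by auto
      thus "m \<in> M <#> cyc z" using set_multI[OF m cyc_mem] by metis
    qed
    ultimately show False using x by auto
  qed
  thus ?thesis using M DM MH zM SH by blast
qed

lemma sub_complement:
  assumes Z: "subgroup Z G" and ab: "\<forall>a\<in>Z. \<forall>b\<in>Z. a \<otimes> b = b \<otimes> a" and D: "subgroup D G" and DZ: "D \<subseteq> Z"
  shows "\<exists>W. subgroup W G \<and> W \<subseteq> Z \<and> W \<inter> D \<subseteq> {\<one>} \<and> W <#> D = Z"
proof -
  define F where "F = {W. subgroup W G \<and> (W \<subseteq> Z \<and> W \<inter> D \<subseteq> {\<one>})}"
  have finF: "finite F" unfolding F_def by (rule finite_subgroups)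
  have "{\<one>} \<in> F" unfolding F_def using triv_subgroup subgroup.one_closed[OF Z] by auto
  then obtain W where WF: "W \<in> F" and mx: "\<forall>b\<in>F. W \<le> b \<longrightarrow> W = b"
    using finite_has_maximal[OF finF] by blast
  have W: "subgroup W G" and WZ: "W \<subseteq> Z" and WD: "W \<inter> D \<subseteq> {\<one>}" using WF unfolding F_def by auto
  have Zc: "Z \<subseteq> carrier G" using Z subgroup.subset by auto
  have cycZ: "\<And>x. x \<in> Z \<Longrightarrow> cyc x \<subseteq> Z"
    using Z sub_pow_closed by (auto elim!: cycE)
  have S: "subgroup (W <#> D) G" using prod_subgroup[OF W D] ab WZ DZ by blast
  have SZ: "W <#> D \<subseteq> Z" using WZ DZ subgroup.m_closed[OF Z] by (auto elim!: set_multE)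
  have WS: "W \<subseteq> W <#> D"
  proof
    fix w assume w: "w \<in> W"
    have "w = w \<otimes> \<one>" using w WZ Zc by auto
    thus "w \<in> W <#> D" using set_multI[OF w subgroup.one_closed[OF D]] by metis
  qed
  have "Z \<subseteq> W <#> D"
  proof (rule ccontr)
    assume "\<not> Z \<subseteq> W <#> D"
    then obtain x where x: "x \<in> Z" "x \<notin> W <#> D" by blast
    have xC: "x \<in> carrier G" using x Zc by auto
    have W': "subgroup (W <#> cyc x) G" using prod_subgroup[OF W cyc_subgroup[OF xC]] ab WZ cycZ[OF x(1)] by blast
    have WW': "W \<subseteq> W <#> cyc x"
    proof
      fix m assume m: "m \<in> W"
      have "m = m \<otimes> x [^] (0::nat)" using m WZ Zc by auto
      thus "m \<in> W <#> cyc x" using set_multI[OF m cyc_mem] by metis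
    qed
    have W'Z: "W <#> cyc x \<subseteq> Z" using WZ cycZ[OF x(1)] subgroup.m_closed[OF Z] by (auto elim!: set_multE)
    have W'D: "(W <#> cyc x) \<inter> D \<subseteq> {\<one>}"
    proof
      fix y assume "y \<in> (W <#> cyc x) \<inter> D"
      then obtain w c where wc: "w \<in> W" "c \<in> cyc x" "y = w \<otimes> c" "y \<in> D" by (auto elim!: set_multE)
      then obtain i where ci: "c = x [^] (i::nat)" by (meson cycE)
      have wC: "w \<in> carrier G" using wc WZ Zc by auto
      show "y \<in> {\<one>}"
      proof (cases "p dvd i")
        case True
        hence "c = \<one>" using ci pow_dvd_one xC by simp
        thus ?thesis using wc WD wC by auto
      next
        case False
        have yC: "y \<in> carrier G" using wc wC xC ci by simp
        have "c = inv w \<otimes> y" using wc wC ci xC by (simp add: m_assoc[symmetric])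
        hence "c \<in> W <#> D" using set_multI[OF subgroup.m_inv_closed[OF W wc(1)] wc(4)] by simp
        hence "x \<in> W <#> D" using cop_pow[OF xC S _ False] ci by simp
        thus ?thesis using x by simp
      qed
    qed
    have "W <#> cyc x \<in> F" unfolding F_def using W' W'Z W'D by auto
    hence "W = W <#> cyc x" using mx WW' by auto
    moreover have "x \<in> W <#> cyc x" using set_multI[OF subgroup.one_closed[OF W] self_cyc[OF xC]] xC by simp
    ultimately show False using x WS by auto
  qed
  thus ?thesis using W WZ WD SZ by blast
qed

end

context group
begin

lemma gen_subgroup_self: "subgroup S G \<Longrightarrow> generate G S = S"
  using generate_subgroup_incl[of S S] generate.incl[of _ S G] by blast

lemma decomp_two:
  assumes H: "subgroup H G" and M: "subgroup M G" and C: "subgroup C G" and MH: "M \<subseteq> H" and CH: "C \<subseteq> H"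
    and com: "\<forall>m\<in>M. \<forall>c\<in>C. m \<otimes> c = c \<otimes> m" and prod: "M <#> C = H"
    and nM: "M \<noteq> H" and nC: "C \<noteq> H" and n1: "H \<noteq> {\<one>}"
  shows "central_decomposition (G\<lparr>carrier := H\<rparr>) {M, C}"
  unfolding central_decomposition_def
proof (intro conjI allI impI)
  show "\<forall>Ha\<in>{M, C}. subgroup Ha (G\<lparr>carrier := H\<rparr>)"
    using subgroup_incl[OF M H MH] subgroup_incl[OF C H CH] by auto
  show "\<forall>Ha\<in>{M, C}. \<forall>K\<in>{M, C}. Ha \<noteq> K \<longrightarrow> (\<forall>x\<in>Ha. \<forall>y\<in>K. x \<otimes>\<^bsub>G\<lparr>carrier := H\<rparr>\<^esub> y = y \<otimes>\<^bsub>G\<lparr>carrier := H\<rparr>\<^esub> x)"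
    using com by auto
  have "generate (G\<lparr>carrier := H\<rparr>) (\<Union>{M, C}) = generate G (M \<union> C)"
    using generate_consistent[of "M \<union> C" H] MH CH H by auto
  also have "\<dots> = H" using gen_union[OF M C com] prod by simp
  finally show "generate (G\<lparr>carrier := H\<rparr>) (\<Union>{M, C}) = carrier (G\<lparr>carrier := H\<rparr>)" by simp
  fix J assume J: "J \<subset> {M, C}"
  have U: "\<Union>J = {} \<or> \<Union>J = M \<or> \<Union>J = C"
  proof (cases "M \<in> J")
    case True
    hence "C \<notin> J \<or> C = M" using J by auto
    thus ?thesis using True J by auto
  next
    case False
    thus ?thesis using J by auto
  qed
  have UH: "\<Union>J \<subseteq> H" using J MH CH by auto
  have "generate (G\<lparr>carrier := H\<rparr>) (\<Union>J) = generate G (\<Union>J)"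
    using generate_consistent[OF UH H] .
  moreover have "generate G (\<Union>J) \<noteq> H"
  proof -
    from U consider "\<Union>J = {}" | "\<Union>J = M" | "\<Union>J = C" by blast
    then show ?thesis
    proof cases
      case 1
      then have "generate G (\<Union>J) = {\<one>}" by (simp only: generate_empty)
      with n1 show ?thesis by auto
    next
      case 2 then show ?thesis using gen_subgroup_self[OF M] nM by simp
    next
      case 3 then show ?thesis using gen_subgroup_self[OF C] nC by simp
    qed
  qed
  ultimately show "generate (G\<lparr>carrier := H\<rparr>) (\<Union>J) \<noteq> carrier (G\<lparr>carrier := H\<rparr>)" by simp
qed

lemma decomp_two_contra:
  assumes "centrally_indecomposable G H" and "central_decomposition (G\<lparr>carrier := H\<rparr>) {M, C}" and "M \<noteq> H"
  shows False
proof -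
  have "\<forall>\<H>. central_decomposition (G\<lparr>carrier := H\<rparr>) \<H> \<longleftrightarrow> \<H> = {H}"
    using assms(1) unfolding centrally_indecomposable_def .
  hence "central_decomposition (G\<lparr>carrier := H\<rparr>) {M, C} \<longleftrightarrow> {M, C} = {H}" by (rule spec)
  hence eq: "{M, C} = {H}" using assms(2) by (rule iffD1)
  have "M \<in> {M, C}" by (rule insertI1)
  hence "M \<in> {H}" by (simp only: eq)
  thus False using assms(3) by (simp only: singleton_iff)
qed

lemma cd_D:
  assumes "central_decomposition G \<A>"
  shows cd_subs: "\<forall>H\<in>\<A>. subgroup H G"
    and cd_com: "\<forall>H\<in>\<A>. \<forall>K\<in>\<A>. H \<noteq> K \<longrightarrow> (\<forall>x\<in>H. \<forall>y\<in>K. x \<otimes> y = y \<otimes> x)"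
    and cd_gen: "generate G (\<Union>\<A>) = carrier G"
    and cd_min: "\<forall>\<J>. \<J> \<subset> \<A> \<longrightarrow> generate G (\<Union>\<J>) \<noteq> carrier G"
  using assms unfolding central_decomposition_def by auto

lemma cd_member_comm:
  assumes "central_decomposition G \<A>" "H \<in> \<A>" "h \<in> H" "K \<in> \<A>" "K \<noteq> H" "k \<in> K"
  shows "h \<otimes> k = k \<otimes> h"
proof -
  have "H \<noteq> K" using assms(5) by auto
  then show ?thesis using cd_com[OF assms(1)] assms(2,3,4,6) by blast
qed

lemma cd_sub: "central_decomposition G \<A> \<Longrightarrow> H \<in> \<A> \<Longrightarrow> subgroup H G"
  using cd_subs by blast

lemma cd_Uc: assumes "central_decomposition G \<A>" shows "\<Union>\<A> \<subseteq> carrier G"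
proof
  fix x assume "x \<in> \<Union>\<A>"
  then obtain H where "H \<in> \<A>" "x \<in> H" by blast
  then show "x \<in> carrier G" using cd_sub[OF assms] subgroup.subset by blast
qed

lemma cd_abelian_central:
  assumes cd: "central_decomposition G \<A>" and H: "H \<in> \<A>" and ab: "\<forall>x\<in>H. \<forall>y\<in>H. x \<otimes> y = y \<otimes> x"
  shows "H \<subseteq> group_center G"
proof
  fix h assume h: "h \<in> H"
  have hc: "h \<in> carrier G" using cd_sub[OF cd H] h subgroup.subset by blast
  show "h \<in> group_center G"
  proof (rule centerI[OF cd_gen[OF cd] cd_Uc[OF cd] hc], intro ballI)
    fix y assume "y \<in> \<Union>\<A>"
    then obtain K where K: "K \<in> \<A>" "y \<in> K" by blast
    show "h \<otimes> y = y \<otimes> h"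
    proof (cases "K = H")
      case True
      then have yH: "y \<in> H" using K(2) by simp
      show ?thesis using ab h yH by simp
    next
      case False show ?thesis using cd_member_comm[OF cd H h K(1) False K(2)] .
    qed
  qed
qed

end

context expgroup
begin

lemma noncentral_center:
  assumes cd: "central_decomposition G \<A>" and HA: "H \<in> \<A>" and ind: "centrally_indecomposable G H"
    and nc: "\<not> H \<subseteq> group_center G"
  shows "H \<inter> group_center G \<subseteq> derived G H"
proof
  fix z assume zz: "z \<in> H \<inter> group_center G"
  show "z \<in> derived G H"
  proof (rule ccontr)
    assume zD: "z \<notin> derived G H"
    have H: "subgroup H G" using cd_sub[OF cd HA] .
    have Hc: "H \<subseteq> carrier G" using H subgroup.subset by auto
    have D: "subgroup (derived G H) G" using derived_is_subgroup[OF Hc] .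
    have DH: "derived G H \<subseteq> H" using derived_incl[OF _ H] by simp
    have comm: "\<forall>x\<in>H. \<forall>y\<in>H. x \<otimes> y \<otimes> inv x \<otimes> inv y \<in> derived G H"
    proof (intro ballI)
      fix x y assume "x \<in> H" "y \<in> H"
      then have "x \<otimes> y \<otimes> inv x \<otimes> inv y \<in> derived_set G H" by blast
      then show "x \<otimes> y \<otimes> inv x \<otimes> inv y \<in> derived G H" unfolding derived_def by (rule generate.incl)
    qed
    have zC: "z \<in> group_center G" and zH: "z \<in> H" using zz by auto
    have zc: "\<forall>y\<in>H. z \<otimes> y = y \<otimes> z" proof (intro ballI)
      fix y assume "y \<in> H" then have "y \<in> carrier G" using Hc by blast
      then show "z \<otimes> y = y \<otimes> z" using center_comm[OF zC] by blast
    qed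
    obtain M where M: "subgroup M G" "derived G H \<subseteq> M" "M \<subseteq> H" "z \<notin> M" "M <#> cyc z = H"
      using elem_complement[OF H D DH zH zD comm zc] by blast
    have zc': "z \<in> carrier G" using zH Hc by auto
    have cz: "cyc z \<subseteq> group_center G" using sub_pow_closed[OF center_subgroup zC] by (auto elim!: cycE)
    have cycH: "cyc z \<subseteq> H" using H sub_pow_closed zH by (auto elim!: cycE)
    have com: "\<forall>m\<in>M. \<forall>c\<in>cyc z. m \<otimes> c = c \<otimes> m"
    proof (intro ballI)
      fix m c assume m: "m \<in> M" and c: "c \<in> cyc z"
      have cZ: "c \<in> group_center G" using cz c by blast
      have mC: "m \<in> carrier G" using m M(3) Hc by blast
      show "m \<otimes> c = c \<otimes> m" using center_comm[OF cZ mC] by (rule sym)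
    qed
    have nab: "cyc z \<noteq> H"
    proof
      assume "cyc z = H"
      hence "\<forall>x\<in>H. \<forall>y\<in>H. x \<otimes> y = y \<otimes> x" using cyc_comm[OF zc'] by blast
      thus False using cd_abelian_central[OF cd HA] nc by blast
    qed
    have n1: "H \<noteq> {\<one>}" using nc subgroup.one_closed[OF center_subgroup] by auto
    have nMH: "M \<noteq> H" using M(4) zH by auto
    have "central_decomposition (G\<lparr>carrier := H\<rparr>) {M, cyc z}"
      using decomp_two[OF H M(1) cyc_subgroup[OF zc'] M(3) cycH com M(5) nMH nab n1] .
    thus False using decomp_two_contra[OF ind _ nMH] by blast
  qed
qed

lemma central_cyclic:
  assumes H: "subgroup H G" and ind: "centrally_indecomposable G H" and HZ: "H \<subseteq> group_center G"
    and c: "c \<in> H" "c \<noteq> \<one>"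
  shows "H = cyc c"
proof (rule ccontr)
  assume ne: "H \<noteq> cyc c"
  have Hc: "H \<subseteq> carrier G" using H subgroup.subset by auto
  have cc: "c \<in> carrier G" using c Hc by auto
  have ab: "\<forall>x\<in>H. \<forall>y\<in>H. x \<otimes> y = y \<otimes> x"
  proof (intro ballI)
    fix x y assume x: "x \<in> H" and y: "y \<in> H"
    have xZ: "x \<in> group_center G" using HZ x by blast
    have yC: "y \<in> carrier G" using y Hc by blast
    show "x \<otimes> y = y \<otimes> x" using center_comm[OF xZ yC] .
  qed
  have comm: "\<forall>x\<in>H. \<forall>y\<in>H. x \<otimes> y \<otimes> inv x \<otimes> inv y \<in> {\<one>}"
  proof (intro ballI)
    fix x y assume xy: "x \<in> H" "y \<in> H"
    have xc: "x \<in> carrier G" "y \<in> carrier G" using xy Hc by auto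
    have "x \<otimes> y \<otimes> inv x \<otimes> inv y = y \<otimes> x \<otimes> inv x \<otimes> inv y" using ab xy by metis
    also have "\<dots> = \<one>" using xc by (simp add: m_assoc)
    finally show "x \<otimes> y \<otimes> inv x \<otimes> inv y \<in> {\<one>}" by simp
  qed
  obtain M where M: "subgroup M G" "{\<one>} \<subseteq> M" "M \<subseteq> H" "c \<notin> M" "M <#> cyc c = H"
  proof -
    have "{\<one>} \<subseteq> H" using subgroup.one_closed[OF H] by auto
    moreover have "c \<notin> {\<one>}" using c by auto
    moreover have "\<forall>y\<in>H. c \<otimes> y = y \<otimes> c" using ab c by blast
    ultimately show ?thesis using elem_complement[OF H triv_subgroup _ c(1) _ comm] that by blast
  qed
  have cycH: "cyc c \<subseteq> H" using H sub_pow_closed c by (auto elim!: cycE)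
  have com: "\<forall>m\<in>M. \<forall>x\<in>cyc c. m \<otimes> x = x \<otimes> m" using ab M(3) cycH by blast
  have nMH: "M \<noteq> H" using M(4) c(1) by auto
  have n1: "H \<noteq> {\<one>}" using c by auto
  have ne': "cyc c \<noteq> H" using ne by auto
  have "central_decomposition (G\<lparr>carrier := H\<rparr>) {M, cyc c}"
    using decomp_two[OF H M(1) cyc_subgroup[OF cc] M(3) cycH com M(5) nMH ne' n1] .
  thus False using decomp_two_contra[OF ind _ nMH] by blast
qed

end

context group
begin

lemma prodE:
  assumes "A <#> N = carrier G" "x \<in> carrier G"
  obtains a n where "a \<in> A" "n \<in> N" "x = a \<otimes> n"
proof -
  have "x \<in> A <#> N" using assms by simp
  thus ?thesis using that by (auto elim!: set_multE)
qed

lemma centerI2: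
  assumes AN: "A <#> N = carrier G" and Ac: "A \<subseteq> carrier G" and Nc: "N \<subseteq> carrier G"
    and x: "x \<in> carrier G" and ca: "\<forall>a\<in>A. x \<otimes> a = a \<otimes> x" and cn: "\<forall>n\<in>N. x \<otimes> n = n \<otimes> x"
  shows "x \<in> group_center G"
  unfolding group_center_def
proof (safe)
  show "x \<in> carrier G" by fact
  fix y assume "y \<in> carrier G"
  then obtain a n where an: "a \<in> A" "n \<in> N" "y = a \<otimes> n" using prodE[OF AN] by blast
  have c: "a \<in> carrier G" "n \<in> carrier G" using an Ac Nc by auto
  have "x \<otimes> (a \<otimes> n) = (x \<otimes> a) \<otimes> n" using c x by (simp add: m_assoc)
  also have "\<dots> = (a \<otimes> x) \<otimes> n" using ca an by simp
  also have "\<dots> = a \<otimes> (x \<otimes> n)" using c x by (simp add: m_assoc)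
  also have "\<dots> = a \<otimes> (n \<otimes> x)" using cn an by simp
  also have "\<dots> = (a \<otimes> n) \<otimes> x" using c x by (simp add: m_assoc)
  finally show "x \<otimes> y = y \<otimes> x" using an by simp
qed

lemma build_iso:
  assumes fin: "finite (carrier G)" and A: "subgroup A G" and N: "subgroup N G"
    and AN: "A <#> N = carrier G" and com: "\<forall>a\<in>A. \<forall>n\<in>N. a \<otimes> n = n \<otimes> a"
    and psiC: "\<forall>a\<in>A. \<psi> a \<in> carrier G" and psiH: "\<forall>a\<in>A. \<forall>b\<in>A. \<psi> (a \<otimes> b) = \<psi> a \<otimes> \<psi> b"
    and pc: "\<forall>a\<in>A. \<forall>n\<in>N. \<psi> a \<otimes> n = n \<otimes> \<psi> a"
    and fx: "\<forall>d\<in>A \<inter> N. \<psi> d = d"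
    and inj: "\<forall>a\<in>A. \<forall>n\<in>N. \<psi> a \<otimes> n = \<one> \<longrightarrow> a \<otimes> n = \<one>"
  shows "\<exists>\<alpha>\<in>iso G G. (\<forall>n\<in>N. \<alpha> n = n) \<and> (\<forall>a\<in>A. \<alpha> a = \<psi> a)"
proof -
  have Ac: "A \<subseteq> carrier G" and Nc: "N \<subseteq> carrier G" using A N subgroup.subset by auto
  define dq where "dq x = (SOME q. fst q \<in> A \<and> snd q \<in> N \<and> x = fst q \<otimes> snd q)" for x
  define \<alpha> where "\<alpha> x = \<psi> (fst (dq x)) \<otimes> snd (dq x)" for x
  have dq: "fst (dq x) \<in> A \<and> snd (dq x) \<in> N \<and> x = fst (dq x) \<otimes> snd (dq x)" if x: "x \<in> carrier G" for x
  proof -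
    obtain a n where "a \<in> A" "n \<in> N" "x = a \<otimes> n" using prodE[OF AN x] by blast
    hence "\<exists>q. fst q \<in> A \<and> snd q \<in> N \<and> x = fst q \<otimes> snd q" by (intro exI[of _ "(a, n)"]) simp
    thus ?thesis unfolding dq_def by (rule someI_ex)
  qed
  have psi1: "\<psi> \<one> = \<one>" using fx subgroup.one_closed[OF A] subgroup.one_closed[OF N] by auto
  have wd: "\<psi> a \<otimes> n = \<psi> a' \<otimes> n'"
    if a: "a \<in> A" "n \<in> N" "a' \<in> A" "n' \<in> N" "a \<otimes> n = a' \<otimes> n'" for a n a' n'
  proof -
    have c: "a \<in> carrier G" "n \<in> carrier G" "a' \<in> carrier G" "n' \<in> carrier G" using a Ac Nc by auto
    define d where "d = inv a' \<otimes> a"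
    have dA: "d \<in> A" unfolding d_def using a subgroup.m_closed[OF A] subgroup.m_inv_closed[OF A] by blast
    have dC: "d \<in> carrier G" unfolding d_def using c by simp
    have "d \<otimes> n = inv a' \<otimes> (a \<otimes> n)" unfolding d_def using c by (simp add: m_assoc)
    also have "\<dots> = inv a' \<otimes> (a' \<otimes> n')" using a(5) by simp
    also have "\<dots> = n'" using c by (simp add: m_assoc[symmetric])
    finally have e1: "d \<otimes> n = n'" .
    have "n' \<otimes> inv n = d \<otimes> n \<otimes> inv n" using e1 by simp
    also have "\<dots> = d" using c dC by (simp add: m_assoc)
    finally have dN': "d = n' \<otimes> inv n" by simp
    hence dN: "d \<in> N" using a subgroup.m_closed[OF N] subgroup.m_inv_closed[OF N] by blast
    have aa: "a = a' \<otimes> d" unfolding d_def using c by (simp add: m_assoc[symmetric])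
    have "\<psi> a = \<psi> a' \<otimes> \<psi> d" using aa psiH a dA by simp
    also have "\<dots> = \<psi> a' \<otimes> d" using fx dA dN by simp
    finally have "\<psi> a \<otimes> n = \<psi> a' \<otimes> (n' \<otimes> inv n) \<otimes> n" using dN' by simp
    also have "\<dots> = \<psi> a' \<otimes> n'" using c psiC a by (simp add: m_assoc)
    finally show ?thesis .
  qed
  have aeq: "\<alpha> (a \<otimes> n) = \<psi> a \<otimes> n" if a: "a \<in> A" "n \<in> N" for a n
  proof -
    have x: "a \<otimes> n \<in> carrier G" using a Ac Nc by auto
    show ?thesis unfolding \<alpha>_def using wd[OF _ _ a] dq[OF x] by metis
  qed
  have fixN: "\<forall>n\<in>N. \<alpha> n = n"
  proof
    fix n assume n: "n \<in> N"
    have "\<alpha> (\<one> \<otimes> n) = \<psi> \<one> \<otimes> n" using aeq[OF subgroup.one_closed[OF A] n] .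
    thus "\<alpha> n = n" using n Nc psi1 by auto
  qed
  have onA: "\<forall>a\<in>A. \<alpha> a = \<psi> a"
  proof
    fix a assume a: "a \<in> A"
    have "\<alpha> (a \<otimes> \<one>) = \<psi> a \<otimes> \<one>" using aeq[OF a subgroup.one_closed[OF N]] .
    thus "\<alpha> a = \<psi> a" using a Ac psiC by auto
  qed
  have aC: "\<alpha> x \<in> carrier G" if "x \<in> carrier G" for x
    unfolding \<alpha>_def using dq[OF that] psiC Nc by blast
  have hom: "\<alpha> \<in> hom G G"
  proof (rule homI)
    fix x assume "x \<in> carrier G" thus "\<alpha> x \<in> carrier G" by (rule aC)
  next
    fix x y assume x: "x \<in> carrier G" and y: "y \<in> carrier G"
    obtain a n where an: "a \<in> A" "n \<in> N" "x = a \<otimes> n" using prodE[OF AN x] by blast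
    obtain b m where bm: "b \<in> A" "m \<in> N" "y = b \<otimes> m" using prodE[OF AN y] by blast
    have c: "a \<in> carrier G" "n \<in> carrier G" "b \<in> carrier G" "m \<in> carrier G" using an bm Ac Nc by auto
    have "x \<otimes> y = a \<otimes> (n \<otimes> b) \<otimes> m" using an bm c by (simp add: m_assoc)
    also have "\<dots> = a \<otimes> (b \<otimes> n) \<otimes> m" using com an bm by metis
    also have "\<dots> = (a \<otimes> b) \<otimes> (n \<otimes> m)" using c by (simp add: m_assoc)
    finally have xy: "x \<otimes> y = (a \<otimes> b) \<otimes> (n \<otimes> m)" .
    have ab: "a \<otimes> b \<in> A" and nm: "n \<otimes> m \<in> N"
      using an bm subgroup.m_closed[OF A] subgroup.m_closed[OF N] by auto
    have pab: "\<psi> a \<in> carrier G" "\<psi> b \<in> carrier G" using psiC an bm by auto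
    have "\<alpha> (x \<otimes> y) = \<psi> (a \<otimes> b) \<otimes> (n \<otimes> m)" using xy aeq[OF ab nm] by simp
    also have "\<dots> = \<psi> a \<otimes> (\<psi> b \<otimes> n) \<otimes> m" using psiH an bm pab c by (simp add: m_assoc)
    also have "\<dots> = \<psi> a \<otimes> (n \<otimes> \<psi> b) \<otimes> m" using pc an bm by metis
    also have "\<dots> = (\<psi> a \<otimes> n) \<otimes> (\<psi> b \<otimes> m)" using pab c by (simp add: m_assoc)
    also have "\<dots> = \<alpha> x \<otimes> \<alpha> y" using aeq an bm by simp
    finally show "\<alpha> (x \<otimes> y) = \<alpha> x \<otimes> \<alpha> y" .
  qed
  interpret gh: group_hom G G \<alpha>
    by (rule group_hom.intro[OF is_group is_group]) (simp add: group_hom_axioms_def hom)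
  have "kernel G G \<alpha> = {\<one>}"
  proof
    show "kernel G G \<alpha> \<subseteq> {\<one>}"
    proof
      fix x assume "x \<in> kernel G G \<alpha>"
      hence x: "x \<in> carrier G" "\<alpha> x = \<one>" by (auto simp: kernel_def)
      obtain a n where an: "a \<in> A" "n \<in> N" "x = a \<otimes> n" using prodE[OF AN x(1)] by blast
      have "\<psi> a \<otimes> n = \<one>" using aeq[OF an(1,2)] an x by simp
      thus "x \<in> {\<one>}" using inj an by auto
    qed
    show "{\<one>} \<subseteq> kernel G G \<alpha>" by (auto simp: kernel_def)
  qed
  hence injA: "inj_on \<alpha> (carrier G)" using gh.inj_iff_trivial_ker by simp
  have "\<alpha> ` carrier G = carrier G" using endo_inj_surj[OF fin _ injA] aC by blast
  hence "\<alpha> \<in> iso G G" using hom injA by (simp add: iso_iff)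
  thus ?thesis using fixN onA by blast
qed

end

context group
begin

lemma center_commC: assumes "z \<in> group_center G" "x \<in> carrier G" shows "x \<otimes> z = z \<otimes> x"
  using center_comm[OF assms] by (rule sym)

lemma cancel_left2 [simp]: "a \<in> carrier G \<Longrightarrow> b \<in> carrier G \<Longrightarrow> a \<otimes> (inv a \<otimes> b) = b"
  by (simp add: m_assoc[symmetric])

lemma center_inv: "z \<in> group_center G \<Longrightarrow> inv z \<in> group_center G"
  using subgroup.m_inv_closed[OF center_subgroup] .

lemma center_C: "z \<in> group_center G \<Longrightarrow> z \<in> carrier G"
  using center_carrier by blast

lemma comm_left:
  assumes x: "x \<in> carrier G" and y: "y \<in> carrier G" and z: "z \<in> group_center G"
  shows "(x \<otimes> z) \<otimes> y \<otimes> inv (x \<otimes> z) \<otimes> inv y = x \<otimes> y \<otimes> inv x \<otimes> inv y"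
proof -
  have zc: "z \<in> carrier G" using center_C[OF z] .
  have zy: "z \<otimes> y = y \<otimes> z" using center_comm[OF z y] .
  have "(x \<otimes> z) \<otimes> y \<otimes> inv (x \<otimes> z) \<otimes> inv y = x \<otimes> (z \<otimes> y) \<otimes> (inv z \<otimes> inv x) \<otimes> inv y"
    using x y zc by (simp add: m_assoc inv_mult_group)
  also have "\<dots> = x \<otimes> (y \<otimes> z) \<otimes> (inv z \<otimes> inv x) \<otimes> inv y" using zy by simp
  also have "\<dots> = x \<otimes> y \<otimes> (z \<otimes> inv z) \<otimes> inv x \<otimes> inv y" using x y zc by (simp add: m_assoc)
  also have "\<dots> = x \<otimes> y \<otimes> inv x \<otimes> inv y" using x y zc by simp
  finally show ?thesis .
qed

lemma comm_right:
  assumes x: "x \<in> carrier G" and y: "y \<in> carrier G" and z: "z \<in> group_center G"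
  shows "x \<otimes> (y \<otimes> z) \<otimes> inv x \<otimes> inv (y \<otimes> z) = x \<otimes> y \<otimes> inv x \<otimes> inv y"
proof -
  have zc: "z \<in> carrier G" using center_C[OF z] .
  have zx: "z \<otimes> inv x = inv x \<otimes> z" using center_comm[OF z] x by simp
  have "x \<otimes> (y \<otimes> z) \<otimes> inv x \<otimes> inv (y \<otimes> z) = x \<otimes> y \<otimes> (z \<otimes> inv x) \<otimes> (inv z \<otimes> inv y)"
    using x y zc by (simp add: m_assoc inv_mult_group)
  also have "\<dots> = x \<otimes> y \<otimes> (inv x \<otimes> z) \<otimes> (inv z \<otimes> inv y)" using zx by simp
  also have "\<dots> = x \<otimes> y \<otimes> inv x \<otimes> (z \<otimes> inv z) \<otimes> inv y" using x y zc by (simp add: m_assoc)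
  also have "\<dots> = x \<otimes> y \<otimes> inv x \<otimes> inv y" using x y zc by simp
  finally show ?thesis .
qed

lemma derived_sub:
  assumes A: "subgroup A G" and K: "subgroup K G" and AK: "A \<subseteq> K <#> group_center G"
  shows "derived G A \<subseteq> K"
  unfolding derived_def
proof (rule generate_subgroup_incl[OF _ K], safe)
  fix a1 a2 assume a: "a1 \<in> A" "a2 \<in> A"
  obtain k1 z1 where 1: "k1 \<in> K" "z1 \<in> group_center G" "a1 = k1 \<otimes> z1" using AK a(1) by (auto elim!: set_multE)
  obtain k2 z2 where 2: "k2 \<in> K" "z2 \<in> group_center G" "a2 = k2 \<otimes> z2" using AK a(2) by (auto elim!: set_multE)
  have kc: "k1 \<in> carrier G" "k2 \<in> carrier G" using 1 2 K subgroup.subset by auto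
  have "a1 \<otimes> a2 \<otimes> inv a1 \<otimes> inv a2 = k1 \<otimes> (k2 \<otimes> z2) \<otimes> inv k1 \<otimes> inv (k2 \<otimes> z2)"
    using comm_left[OF kc(1) _ 1(2), of "k2 \<otimes> z2"] kc 1 2 center_C by simp
  also have "\<dots> = k1 \<otimes> k2 \<otimes> inv k1 \<otimes> inv k2" using comm_right[OF kc 2(2)] .
  finally show "a1 \<otimes> a2 \<otimes> inv a1 \<otimes> inv a2 \<in> K"
    using 1 2 subgroup.m_closed[OF K] subgroup.m_inv_closed[OF K] by simp
qed

lemma mult_inv_center:
  assumes a: "a \<in> carrier G" "b \<in> carrier G" and u: "u \<in> group_center G" "v \<in> group_center G"
  shows "a \<otimes> b \<otimes> inv (u \<otimes> v) = (a \<otimes> inv u) \<otimes> (b \<otimes> inv v)"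
proof -
  have uc: "u \<in> carrier G" "v \<in> carrier G" using u center_C by auto
  have iu: "inv u \<in> group_center G" using center_inv u by blast
  have "(a \<otimes> inv u) \<otimes> (b \<otimes> inv v) = a \<otimes> (inv u \<otimes> (b \<otimes> inv v))" using a uc by (simp add: m_assoc)
  also have "\<dots> = a \<otimes> ((b \<otimes> inv v) \<otimes> inv u)" using center_comm[OF iu] a uc by simp
  also have "\<dots> = a \<otimes> b \<otimes> inv (u \<otimes> v)" using a uc by (simp add: m_assoc inv_mult_group)
  finally show ?thesis by simp
qed

lemma set_mult_center_comm:
  assumes "x \<in> A <#> group_center G" and Ac: "A \<subseteq> carrier G" and n: "n \<in> carrier G"
    and c: "\<forall>a\<in>A. a \<otimes> n = n \<otimes> a"
  shows "x \<otimes> n = n \<otimes> x"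
proof -
  obtain a z where az: "a \<in> A" "z \<in> group_center G" "x = a \<otimes> z" using assms(1) by (auto elim!: set_multE)
  have ac: "a \<in> carrier G" "z \<in> carrier G" using az Ac center_C by auto
  have "x \<otimes> n = a \<otimes> (z \<otimes> n)" using az ac n by (simp add: m_assoc)
  also have "\<dots> = a \<otimes> (n \<otimes> z)" using center_comm[OF az(2) n] by simp
  also have "\<dots> = (a \<otimes> n) \<otimes> z" using ac n by (simp add: m_assoc)
  also have "\<dots> = (n \<otimes> a) \<otimes> z" using c az by simp
  also have "\<dots> = n \<otimes> x" using az ac n by (simp add: m_assoc)
  finally show ?thesis .
qed

lemma in_set_mult_center:
  assumes "subgroup A G" "a \<in> A" shows "a \<in> A <#> group_center G"
proof -
  have "a = a \<otimes> \<one>" using assms subgroup.subset by fastforce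
  thus ?thesis using set_multI[OF assms(2) subgroup.one_closed[OF center_subgroup]] by metis
qed

end

lemma (in group) cancel_left3 [simp]: "a \<in> carrier G \<Longrightarrow> b \<in> carrier G \<Longrightarrow> inv a \<otimes> (a \<otimes> b) = b"
  by (simp add: m_assoc[symmetric])

lemma (in group) sub_center_mult:
  assumes "Xs \<subseteq> group_center G" shows "Xs <#> group_center G \<subseteq> group_center G"
  using assms subgroup.m_closed[OF center_subgroup] by (auto elim!: set_multE)

context expgroup
begin

lemma step_noncentral:
  assumes cdA: "central_decomposition G \<A>" and AA: "A \<in> \<A>" and indA: "centrally_indecomposable G A"
    and ncA: "\<not> A \<subseteq> group_center G"
    and cdK: "central_decomposition G \<K>" and KK: "K \<in> \<K>" and indK: "centrally_indecomposable G K"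
    and eq: "K <#> group_center G = A <#> group_center G"
  shows "\<exists>\<beta>\<in>iso G G. \<beta> ` A = K \<and> (\<forall>n\<in>generate G (\<Union>(\<A> - {A})). \<beta> n = n)"
proof -
  define Z where "Z = group_center G"
  define N where "N = generate G (\<Union>(\<A> - {A}))"
  have Zs: "subgroup Z G" unfolding Z_def by (rule center_subgroup)
  note sp = cd_split[OF cdA AA]
  have NS: "subgroup N G" and comAN: "\<forall>a\<in>A. \<forall>n\<in>N. a \<otimes> n = n \<otimes> a" and AN: "A <#> N = carrier G"
    and AS: "subgroup A G"
    using sp unfolding N_def by auto
  have KS: "subgroup K G" using cd_sub[OF cdK KK] .
  have Ac: "A \<subseteq> carrier G" and Kc: "K \<subseteq> carrier G" and Nc: "N \<subseteq> carrier G" and Zc: "Z \<subseteq> carrier G"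
    using AS KS NS Zs subgroup.subset by auto
  have ncK: "\<not> K \<subseteq> Z"
  proof
    assume "K \<subseteq> Z"
    hence "K <#> Z \<subseteq> Z" unfolding Z_def by (rule sub_center_mult)
    moreover have "A \<subseteq> A <#> Z" unfolding Z_def using in_set_mult_center[OF AS] by blast
    ultimately show False using eq ncA unfolding Z_def by blast
  qed
  have AKZ: "A \<subseteq> K <#> Z" unfolding Z_def using in_set_mult_center[OF AS] eq by blast
  have KAZ: "K \<subseteq> A <#> Z" unfolding Z_def using in_set_mult_center[OF KS] eq by blast
  have AZK: "A \<inter> Z \<subseteq> K"
    using noncentral_center[OF cdA AA indA ncA] derived_sub[OF AS KS AKZ[unfolded Z_def]] unfolding Z_def by blast
  have KZA: "K \<inter> Z \<subseteq> A"
    using noncentral_center[OF cdK KK indK ncK[unfolded Z_def]] derived_sub[OF KS AS KAZ[unfolded Z_def]] unfolding Z_def by blast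
  have abZ: "\<forall>a\<in>Z. \<forall>b\<in>Z. a \<otimes> b = b \<otimes> a" unfolding Z_def using center_comm center_C by blast
  have KZs: "subgroup (K \<inter> Z) G" using subgroups_Inter_pair[OF KS Zs] .
  obtain W where W: "subgroup W G" "W \<subseteq> Z" "W \<inter> (K \<inter> Z) \<subseteq> {\<one>}" "W <#> (K \<inter> Z) = Z"
    using sub_complement[OF Zs abZ KZs] by blast
  have Wc: "W \<subseteq> carrier G" using W(1) subgroup.subset by auto
  have WZ1: "\<And>w. w \<in> W \<Longrightarrow> w \<in> K \<Longrightarrow> w = \<one>" using W(2,3) by blast
  have uniq: "w = w'" if x: "x \<in> carrier G" and w: "w \<in> W" "w' \<in> W"
    and k: "x \<otimes> inv w \<in> K" "x \<otimes> inv w' \<in> K" for x w w'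
  proof -
    have wc: "w \<in> carrier G" "w' \<in> carrier G" using w Wc by auto
    have e: "inv (x \<otimes> inv w) \<otimes> (x \<otimes> inv w') = w \<otimes> inv w'"
      using x wc by (simp add: inv_mult_group m_assoc)
    have "w \<otimes> inv w' \<in> K" using e k subgroup.m_closed[OF KS] subgroup.m_inv_closed[OF KS] by metis
    moreover have "w \<otimes> inv w' \<in> W" using w subgroup.m_closed[OF W(1)] subgroup.m_inv_closed[OF W(1)] by blast
    ultimately have e1: "w \<otimes> inv w' = \<one>" using WZ1 by blast
    have "w = w \<otimes> inv w' \<otimes> w'" using wc by (simp add: m_assoc)
    thus "w = w'" using e1 wc by simp
  qed
  have exw: "\<exists>w\<in>W. a \<otimes> inv w \<in> K" if a: "a \<in> A" for a
  proof -
    obtain k z where kz: "k \<in> K" "z \<in> Z" "a = k \<otimes> z" using AKZ a by (auto elim!: set_multE)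
    obtain w d where wd: "w \<in> W" "d \<in> K \<inter> Z" "z = w \<otimes> d" proof -
      have "z \<in> W <#> (K \<inter> Z)" using W(4) kz(2) by simp
      thus ?thesis using that by (auto elim!: set_multE)
    qed
    have c: "k \<in> carrier G" "w \<in> carrier G" "d \<in> carrier G" using kz wd Kc Wc by auto
    have wZ: "w \<in> Z" using wd W(2) by auto
    have "a \<otimes> inv w = k \<otimes> (w \<otimes> d) \<otimes> inv w" using kz wd by simp
    also have "\<dots> = k \<otimes> (d \<otimes> w) \<otimes> inv w" using center_comm[OF wZ[unfolded Z_def] c(3)] by simp
    also have "\<dots> = k \<otimes> d" using c by (simp add: m_assoc)
    finally have "a \<otimes> inv w \<in> K" using kz wd subgroup.m_closed[OF KS] by simp
    thus ?thesis using wd by blast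
  qed
  define wof where "wof a = (SOME w. w \<in> W \<and> a \<otimes> inv w \<in> K)" for a
  have wof: "wof a \<in> W \<and> a \<otimes> inv (wof a) \<in> K" if "a \<in> A" for a
  proof -
    have "\<exists>w. w \<in> W \<and> a \<otimes> inv w \<in> K" using exw[OF that] by blast
    thus ?thesis unfolding wof_def by (rule someI_ex)
  qed
  have wof_eq: "wof a = w" if "a \<in> A" "w \<in> W" "a \<otimes> inv w \<in> K" for a w
    using uniq[of a "wof a" w] wof[OF that(1)] that Ac by blast
  define \<psi> where "\<psi> a = a \<otimes> inv (wof a)" for a
  have psiK: "\<forall>a\<in>A. \<psi> a \<in> K" unfolding \<psi>_def using wof by blast
  have psiC: "\<forall>a\<in>A. \<psi> a \<in> carrier G" using psiK Kc by blast
  have psiH: "\<forall>a\<in>A. \<forall>b\<in>A. \<psi> (a \<otimes> b) = \<psi> a \<otimes> \<psi> b"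
  proof (intro ballI)
    fix a b assume a: "a \<in> A" and b: "b \<in> A"
    have u: "wof a \<in> W" "wof b \<in> W" using wof a b by auto
    have uZ: "wof a \<in> group_center G" "wof b \<in> group_center G" using u W(2) unfolding Z_def by auto
    have ac: "a \<in> carrier G" "b \<in> carrier G" using a b Ac by auto
    have e: "a \<otimes> b \<otimes> inv (wof a \<otimes> wof b) = \<psi> a \<otimes> \<psi> b"
      unfolding \<psi>_def using mult_inv_center[OF ac uZ] .
    have ab: "a \<otimes> b \<in> A" using a b subgroup.m_closed[OF AS] by blast
    have "\<psi> a \<otimes> \<psi> b \<in> K" using psiK a b subgroup.m_closed[OF KS] by blast
    hence "wof (a \<otimes> b) = wof a \<otimes> wof b"
      using wof_eq[OF ab _] e u subgroup.m_closed[OF W(1)] by simp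
    thus "\<psi> (a \<otimes> b) = \<psi> a \<otimes> \<psi> b" using e unfolding \<psi>_def by simp
  qed
  have cen: "x \<in> Z" if x: "x \<in> carrier G" "\<forall>a\<in>A. x \<otimes> a = a \<otimes> x" "\<forall>n\<in>N. x \<otimes> n = n \<otimes> x" for x
    unfolding Z_def using centerI2[OF AN Ac Nc x] .
  have KcomN: "\<forall>k\<in>K. \<forall>n\<in>N. k \<otimes> n = n \<otimes> k"
  proof (intro ballI)
    fix k n assume k: "k \<in> K" and n: "n \<in> N"
    have "\<forall>a\<in>A. a \<otimes> n = n \<otimes> a" using comAN n by blast
    thus "k \<otimes> n = n \<otimes> k" using set_mult_center_comm[of k A n] KAZ k Ac n Nc unfolding Z_def by blast
  qed
  have pc: "\<forall>a\<in>A. \<forall>n\<in>N. \<psi> a \<otimes> n = n \<otimes> \<psi> a" using psiK KcomN by blast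
  have fx: "\<forall>d\<in>A \<inter> N. \<psi> d = d"
  proof
    fix d assume d: "d \<in> A \<inter> N"
    have dc: "d \<in> carrier G" using d Ac by auto
    have "d \<in> Z"
    proof (rule cen[OF dc])
      show "\<forall>a\<in>A. d \<otimes> a = a \<otimes> d" using comAN d by (metis IntE)
      show "\<forall>n\<in>N. d \<otimes> n = n \<otimes> d" using comAN d by blast
    qed
    hence dK: "d \<in> K" using AZK d by blast
    have "wof d = \<one>" using wof_eq[of d \<one>] d dK dc subgroup.one_closed[OF W(1)] by simp
    thus "\<psi> d = d" unfolding \<psi>_def using dc by simp
  qed
  have inj: "\<forall>a\<in>A. \<forall>n\<in>N. \<psi> a \<otimes> n = \<one> \<longrightarrow> a \<otimes> n = \<one>"
  proof (intro ballI impI)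
    fix a n assume a: "a \<in> A" and n: "n \<in> N" and e: "\<psi> a \<otimes> n = \<one>"
    have ac: "a \<in> carrier G" and nc: "n \<in> carrier G" using a n Ac Nc by auto
    have kK: "\<psi> a \<in> K" using psiK a by blast
    have kc: "\<psi> a \<in> carrier G" using kK Kc by blast
    have "inv n = \<psi> a" using inv_equality[OF e nc kc] .
    hence kN: "\<psi> a \<in> N" using subgroup.m_inv_closed[OF NS n] by simp
    have "\<psi> a \<in> Z"
    proof (rule cen[OF kc])
      show "\<forall>b\<in>A. \<psi> a \<otimes> b = b \<otimes> \<psi> a" using comAN kN by metis
      show "\<forall>m\<in>N. \<psi> a \<otimes> m = m \<otimes> \<psi> a" using KcomN kK by blast
    qed
    hence kA: "\<psi> a \<in> A" using KZA kK by blast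
    have w: "wof a \<in> W" using wof a by blast
    have wc: "wof a \<in> carrier G" using w Wc by blast
    have aeq: "a = \<psi> a \<otimes> wof a" unfolding \<psi>_def using ac wc by (simp add: m_assoc)
    have e2: "inv (\<psi> a) \<otimes> (\<psi> a \<otimes> wof a) = wof a" using kc wc by simp
    have "inv (\<psi> a) \<otimes> a = wof a" using e2 aeq[symmetric] by simp
    hence "wof a = inv (\<psi> a) \<otimes> a" by simp
    hence "wof a \<in> A" using kA a subgroup.m_closed[OF AS] subgroup.m_inv_closed[OF AS] by simp
    moreover have "wof a \<in> Z" using w W(2) by blast
    ultimately have "wof a \<in> K" using AZK by blast
    hence "wof a = \<one>" using WZ1 w by blast
    hence "a = \<psi> a" using aeq kc by simp
    thus "a \<otimes> n = \<one>" using e by simp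
  qed
  obtain \<beta> where \<beta>: "\<beta> \<in> iso G G" "\<forall>n\<in>N. \<beta> n = n" "\<forall>a\<in>A. \<beta> a = \<psi> a"
    using build_iso[OF fin AS NS AN comAN psiC psiH pc fx inj] by blast
  have "\<beta> ` A = K"
  proof
    show "\<beta> ` A \<subseteq> K" using \<beta>(3) psiK by auto
    show "K \<subseteq> \<beta> ` A"
    proof
      fix k assume k: "k \<in> K"
      obtain a z where az: "a \<in> A" "z \<in> Z" "k = a \<otimes> z" using KAZ k by (auto elim!: set_multE)
      obtain w d where wd: "w \<in> W" "d \<in> K \<inter> Z" "z = w \<otimes> d" proof -
        have "z \<in> W <#> (K \<inter> Z)" using W(4) az(2) by simp
        thus ?thesis using that by (auto elim!: set_multE)
      qed
      have c: "a \<in> carrier G" "w \<in> carrier G" "d \<in> carrier G" using az wd Ac Wc Kc by auto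
      have wZ: "w \<in> Z" using wd W(2) by auto
      have dA: "d \<in> A" using wd KZA by blast
      have a'A: "a \<otimes> d \<in> A" using az dA subgroup.m_closed[OF AS] by blast
      have "k = a \<otimes> (w \<otimes> d)" using az wd by simp
      also have "\<dots> = a \<otimes> (d \<otimes> w)" using center_comm[OF wZ[unfolded Z_def] c(3)] by simp
      also have "\<dots> = (a \<otimes> d) \<otimes> inv (inv w)" using c by (simp add: m_assoc)
      finally have ke: "k = (a \<otimes> d) \<otimes> inv (inv w)" .
      have iw: "inv w \<in> W" using subgroup.m_inv_closed[OF W(1) wd(1)] .
      have "wof (a \<otimes> d) = inv w" using wof_eq[OF a'A iw] ke k by simp
      hence "\<psi> (a \<otimes> d) = k" unfolding \<psi>_def using ke by simp
      thus "k \<in> \<beta> ` A" using \<beta>(3) a'A by (metis image_eqI)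
    qed
  qed
  thus ?thesis using \<beta> unfolding N_def by blast
qed

end

context group
begin

lemma center_in_N:
  assumes cdK: "central_decomposition G \<K>" and NS: "subgroup N G" and finK: "finite \<K>"
    and hyp: "\<forall>K\<in>\<K>. K \<inter> group_center G \<subseteq> N"
  shows "group_center G \<subseteq> N"
proof -
  have main: "\<SS> \<subseteq> \<K> \<longrightarrow> generate G (\<Union>\<SS>) \<inter> group_center G \<subseteq> N" if fS: "finite \<SS>" for \<SS>
    using fS
  proof (induction \<SS> rule: finite_induct)
    case empty
    show ?case using generate_empty subgroup.one_closed[OF NS] by auto
  next
    case (insert K0 \<SS>)
    show ?case
    proof
      assume sub: "insert K0 \<SS> \<subseteq> \<K>"
      have K0K: "K0 \<in> \<K>" using sub by blast
      have K0S: "subgroup K0 G" using cd_sub[OF cdK K0K] .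
      have K0c: "K0 \<subseteq> carrier G" using K0S subgroup.subset by auto
      have Uc: "\<Union>\<SS> \<subseteq> carrier G" using cd_Uc[OF cdK] sub by blast
      define S where "S = generate G (\<Union>\<SS>)"
      have SS: "subgroup S G" unfolding S_def using generate_is_subgroup[OF Uc] .
      have Sc: "S \<subseteq> carrier G" using SS subgroup.subset by auto
      have pw: "\<forall>k\<in>K0. \<forall>t\<in>\<Union>\<SS>. k \<otimes> t = t \<otimes> k"
      proof (intro ballI)
        fix k t assume k: "k \<in> K0" and t: "t \<in> \<Union>\<SS>"
        then obtain K where K: "K \<in> \<SS>" "t \<in> K" by blast
        have "K \<noteq> K0" using K insert.hyps(2) by blast
        thus "k \<otimes> t = t \<otimes> k" using cd_member_comm[OF cdK K0K k _ _ K(2)] K sub by blast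
      qed
      have com: "\<forall>k\<in>K0. \<forall>s\<in>S. k \<otimes> s = s \<otimes> k"
        unfolding S_def using comm_gen[OF K0c Uc pw] by blast
      have PS: "subgroup (K0 <#> S) G" using prod_subgroup[OF K0S SS com] .
      have "K0 \<union> \<Union>\<SS> \<subseteq> K0 <#> S"
      proof
        fix x assume "x \<in> K0 \<union> \<Union>\<SS>"
        then show "x \<in> K0 <#> S"
        proof
          assume x: "x \<in> K0"
          have "x = x \<otimes> \<one>" using x K0c by auto
          thus ?thesis using set_multI[OF x subgroup.one_closed[OF SS]] by metis
        next
          assume x: "x \<in> \<Union>\<SS>"
          hence xS: "x \<in> S" unfolding S_def by (rule generate.incl)
          have "x = \<one> \<otimes> x" using xS Sc by auto
          thus ?thesis using set_multI[OF subgroup.one_closed[OF K0S] xS] by metis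
        qed
      qed
      hence genS: "generate G (\<Union>(insert K0 \<SS>)) \<subseteq> K0 <#> S"
        using generate_subgroup_incl[OF _ PS] by simp
      show "generate G (\<Union>(insert K0 \<SS>)) \<inter> group_center G \<subseteq> N"
      proof
        fix x assume "x \<in> generate G (\<Union>(insert K0 \<SS>)) \<inter> group_center G"
        hence x: "x \<in> K0 <#> S" "x \<in> group_center G" using genS by auto
        obtain k s where ks: "k \<in> K0" "s \<in> S" "x = k \<otimes> s" using x(1) by (auto elim!: set_multE)
        have c: "k \<in> carrier G" "s \<in> carrier G" using ks K0c Sc by auto
        have kZ: "k \<in> group_center G"
        proof (rule centerI[OF cd_gen[OF cdK] cd_Uc[OF cdK] c(1)], intro ballI)
          fix y assume "y \<in> \<Union>\<K>"
          then obtain K where K: "K \<in> \<K>" "y \<in> K" by blast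
          show "k \<otimes> y = y \<otimes> k"
          proof (cases "K = K0")
            case False
            show ?thesis using cd_member_comm[OF cdK K0K ks(1) K(1) False K(2)] .
          next
            case True
            hence yK: "y \<in> K0" using K by simp
            have yc: "y \<in> carrier G" using yK K0c by auto
            have "k \<otimes> y \<otimes> s = k \<otimes> (y \<otimes> s)" using c yc by (simp add: m_assoc)
            also have "\<dots> = k \<otimes> (s \<otimes> y)" using com yK ks(2) by simp
            also have "\<dots> = x \<otimes> y" using ks c yc by (simp add: m_assoc)
            also have "\<dots> = y \<otimes> x" using center_comm[OF x(2) yc] .
            also have "\<dots> = y \<otimes> k \<otimes> s" using ks c yc by (simp add: m_assoc)
            finally show ?thesis using c yc by simp
          qed
        qed
        have "s = inv k \<otimes> x" using ks c by simp
        hence sZ: "s \<in> group_center G"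
          using kZ x(2) subgroup.m_closed[OF center_subgroup] subgroup.m_inv_closed[OF center_subgroup] by simp
        have "s \<in> N" using insert.IH sub sZ ks(2) unfolding S_def by blast
        moreover have "k \<in> N" using hyp K0K ks(1) kZ by blast
        ultimately show "x \<in> N" using ks subgroup.m_closed[OF NS] by simp
      qed
    qed
  qed
  have "generate G (\<Union>\<K>) \<inter> group_center G \<subseteq> N" using main[OF finK] by blast
  thus ?thesis using cd_gen[OF cdK] center_carrier by blast
qed

lemma cd_finite:
  assumes fin: "finite (carrier G)" and cd: "central_decomposition G \<A>" shows "finite \<A>"
proof -
  have "\<A> \<subseteq> Pow (carrier G)" using cd_sub[OF cd] subgroup.subset by blast
  thus ?thesis using fin finite_subset by blast
qed

lemma sub_center_eq:
  assumes "subgroup Xs G" "Xs \<subseteq> group_center G" shows "Xs <#> group_center G = group_center G"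
proof
  show "Xs <#> group_center G \<subseteq> group_center G" using sub_center_mult[OF assms(2)] .
  show "group_center G \<subseteq> Xs <#> group_center G"
  proof
    fix z assume z: "z \<in> group_center G"
    have "z = \<one> \<otimes> z" using z center_C by simp
    thus "z \<in> Xs <#> group_center G" using set_multI[OF subgroup.one_closed[OF assms(1)] z] by metis
  qed
qed

end

context expgroup
begin

lemma pow_eq_mod:
  assumes x: "x \<in> carrier G" "x \<noteq> \<one>" and e: "x [^] (i::nat) = x [^] (j::nat)"
  shows "i mod p = j mod p"
proof -
  have p0: "p > 0" using prime prime_gt_0_nat by blast
  have e': "x [^] (i mod p) = x [^] (j mod p)" using e pow_mod[OF x(1)] by metis
  have gen: "a = b" if ab: "a \<le> b" "b < p" "x [^] a = x [^] (b::nat)" for a b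
  proof -
    have "x [^] a \<otimes> x [^] (b - a) = x [^] b" using nat_pow_mult[OF x(1), of a "b - a"] ab(1) by simp
    hence "x [^] a \<otimes> x [^] (b - a) = x [^] a" using ab(3) by simp
    hence "x [^] (b - a) = \<one>" using x by simp
    hence "p dvd (b - a)" using pow_one_dvd[OF x] by blast
    thus "a = b" using ab by (metis diff_is_0_eq dvd_imp_le le_antisym less_imp_diff_less zero_less_diff not_le)
  qed
  show ?thesis
  proof (cases "i mod p \<le> j mod p")
    case True thus ?thesis using gen[OF True _ e'] p0 by simp
  next
    case False thus ?thesis using gen[of "j mod p" "i mod p"] e' p0 by simp
  qed
qed

lemma pow_transfer:
  assumes x: "x \<in> carrier G" "x \<noteq> \<one>" and y: "y \<in> carrier G" and e: "x [^] (i::nat) = x [^] (j::nat)"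
  shows "y [^] i = y [^] j"
  using pow_eq_mod[OF x e] pow_mod[OF y] by metis

lemma step_central:
  assumes cdA: "central_decomposition G \<A>" and AA: "A \<in> \<A>" and indA: "centrally_indecomposable G A"
    and cA: "A \<subseteq> group_center G"
    and cdK: "central_decomposition G \<K>" and frK: "\<forall>K\<in>\<K>. centrally_indecomposable G K"
    and img: "(\<lambda>H. H <#> group_center G) ` \<A> = (\<lambda>K. K <#> group_center G) ` \<K>"
    and frA: "\<forall>H\<in>\<A>. centrally_indecomposable G H"
  shows "\<exists>\<beta>\<in>iso G G. \<beta> ` A \<in> \<K> \<and> \<beta> ` A \<subseteq> group_center G \<and> (\<forall>n\<in>generate G (\<Union>(\<A> - {A})). \<beta> n = n)"
proof -
  define Z where "Z = group_center G"
  define N where "N = generate G (\<Union>(\<A> - {A}))"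
  have Zs: "subgroup Z G" unfolding Z_def by (rule center_subgroup)
  note sp = cd_split[OF cdA AA]
  have NS: "subgroup N G" and comAN: "\<forall>a\<in>A. \<forall>n\<in>N. a \<otimes> n = n \<otimes> a" and AN: "A <#> N = carrier G"
    and AS: "subgroup A G" and Nne: "N \<noteq> carrier G"
    using sp unfolding N_def by auto
  have Ac: "A \<subseteq> carrier G" and Nc: "N \<subseteq> carrier G" and Zc: "Z \<subseteq> carrier G"
    using AS NS Zs subgroup.subset by auto
  have AsubN: False if "A \<subseteq> N"
  proof -
    have "A <#> N \<subseteq> N" using that subgroup.m_closed[OF NS] by (auto elim!: set_multE)
    thus False using AN Nne Nc by blast
  qed
  have HN: "H \<subseteq> N" if "H \<in> \<A>" "H \<noteq> A" for H
    unfolding N_def using that generate.incl[of _ "\<Union>(\<A> - {A})" G] by blast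
  obtain K where KK: "K \<in> \<K>" and KZ: "K \<subseteq> Z" and KN: "\<not> K \<subseteq> N"
  proof (rule ccontr)
    assume "\<not> thesis"
    hence nK: "\<forall>K\<in>\<K>. K \<subseteq> Z \<longrightarrow> K \<subseteq> N" using that by blast
    have corr: "\<exists>H\<in>\<A>. H <#> Z = K <#> Z \<and> H \<noteq> A \<and> \<not> H \<subseteq> Z" if K: "K \<in> \<K>" "\<not> K \<subseteq> Z" for K
    proof -
      have "K <#> Z \<in> (\<lambda>H. H <#> group_center G) ` \<A>" using img K(1) unfolding Z_def by blast
      then obtain H where H: "H \<in> \<A>" "H <#> Z = K <#> Z" unfolding Z_def by blast
      have HS: "subgroup H G" using cd_sub[OF cdA H(1)] .
      have KS: "subgroup K G" using cd_sub[OF cdK K(1)] .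
      have "\<not> H \<subseteq> Z"
      proof
        assume "H \<subseteq> Z"
        hence "H <#> Z \<subseteq> Z" unfolding Z_def by (rule sub_center_mult)
        moreover have "K \<subseteq> K <#> Z" unfolding Z_def using in_set_mult_center[OF KS] by blast
        ultimately show False using H(2) K(2) by blast
      qed
      moreover have "H \<noteq> A" using calculation cA unfolding Z_def by blast
      ultimately show ?thesis using H by blast
    qed
    have hyp: "\<forall>K\<in>\<K>. K \<inter> group_center G \<subseteq> N"
    proof
      fix K assume K: "K \<in> \<K>"
      show "K \<inter> group_center G \<subseteq> N"
      proof (cases "K \<subseteq> Z")
        case True thus ?thesis using nK K by blast
      next
        case False
        obtain H where H: "H \<in> \<A>" "H <#> Z = K <#> Z" "H \<noteq> A" using corr[OF K False] by blast
        have HS: "subgroup H G" using cd_sub[OF cdA H(1)] .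
        have KS: "subgroup K G" using cd_sub[OF cdK K] .
        have "K \<subseteq> H <#> group_center G" using in_set_mult_center[OF KS] H(2) unfolding Z_def by blast
        hence "derived G K \<subseteq> H" using derived_sub[OF KS HS] by blast
        hence "K \<inter> group_center G \<subseteq> H"
          using noncentral_center[OF cdK K] frK K False unfolding Z_def by blast
        thus ?thesis using HN[OF H(1) H(3)] by blast
      qed
    qed
    have ZN: "Z \<subseteq> N" unfolding Z_def using center_in_N[OF cdK NS cd_finite[OF fin cdK] hyp] .
    have "\<Union>\<K> \<subseteq> N"
    proof
      fix x assume "x \<in> \<Union>\<K>"
      then obtain K where K: "K \<in> \<K>" "x \<in> K" by blast
      show "x \<in> N"
      proof (cases "K \<subseteq> Z")
        case True thus ?thesis using nK K by blast
      next
        case False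
        obtain H where H: "H \<in> \<A>" "H <#> Z = K <#> Z" "H \<noteq> A" using corr[OF K(1) False] by blast
        have KS: "subgroup K G" using cd_sub[OF cdK K(1)] .
        have "x \<in> H <#> Z" using in_set_mult_center[OF KS K(2)] H(2) unfolding Z_def by simp
        then obtain h z where hz: "h \<in> H" "z \<in> Z" "x = h \<otimes> z" by (auto elim!: set_multE)
        have "h \<in> N" using HN[OF H(1) H(3)] hz by blast
        moreover have "z \<in> N" using ZN hz by blast
        ultimately show ?thesis using hz subgroup.m_closed[OF NS] by simp
      qed
    qed
    hence "carrier G \<subseteq> N" using cd_gen[OF cdK] generate_subgroup_incl[OF _ NS] by metis
    thus False using Nne Nc by blast
  qed
  have KS: "subgroup K G" using cd_sub[OF cdK KK] .
  have Kc: "K \<subseteq> carrier G" using KS subgroup.subset by auto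
  have indK: "centrally_indecomposable G K" using frK KK by blast
  obtain e where e: "e \<in> K" "e \<notin> N" using KN by blast
  have e1: "e \<noteq> \<one>" using e subgroup.one_closed[OF NS] by blast
  have ec: "e \<in> carrier G" using e Kc by blast
  have Kcyc: "K = cyc e" using central_cyclic[OF KS indK KZ[unfolded Z_def] e(1) e1] .
  obtain c where c: "c \<in> A" "c \<noteq> \<one>"
  proof (rule ccontr)
    assume "\<not> thesis"
    hence "A \<subseteq> {\<one>}" using that by blast
    thus False using AsubN subgroup.one_closed[OF NS] by blast
  qed
  have cc: "c \<in> carrier G" using c Ac by blast
  have Acyc: "A = cyc c" using central_cyclic[OF AS indA cA c] .
  have KN1: "x = \<one>" if "x \<in> K" "x \<in> N" for x
  proof (rule ccontr)
    assume "x \<noteq> \<one>"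
    hence "K = cyc x" using central_cyclic[OF KS indK KZ[unfolded Z_def] that(1)] by blast
    moreover have "cyc x \<subseteq> N" using that(2) sub_pow_closed[OF NS] by (auto elim!: cycE)
    ultimately show False using KN by blast
  qed
  have AN1: "x = \<one>" if "x \<in> A" "x \<in> N" for x
  proof (rule ccontr)
    assume "x \<noteq> \<one>"
    hence "A = cyc x" using central_cyclic[OF AS indA cA that(1)] by blast
    moreover have "cyc x \<subseteq> N" using that(2) sub_pow_closed[OF NS] by (auto elim!: cycE)
    ultimately show False using AsubN by blast
  qed
  define idx where "idx a = (SOME i::nat. a = c [^] i)" for a
  have idx: "c [^] idx a = a" if "a \<in> A" for a
  proof -
    have "\<exists>i::nat. a = c [^] i" using that Acyc by (auto elim!: cycE)
    hence "a = c [^] idx a" unfolding idx_def by (rule someI_ex)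
    thus ?thesis by simp
  qed
  define \<psi> where "\<psi> a = e [^] idx a" for a
  have psiK: "\<forall>a\<in>A. \<psi> a \<in> K" unfolding \<psi>_def using Kcyc cyc_mem by blast
  have psiC: "\<forall>a\<in>A. \<psi> a \<in> carrier G" using psiK Kc by blast
  have psiH: "\<forall>a\<in>A. \<forall>b\<in>A. \<psi> (a \<otimes> b) = \<psi> a \<otimes> \<psi> b"
  proof (intro ballI)
    fix a b assume a: "a \<in> A" and b: "b \<in> A"
    have ab: "a \<otimes> b \<in> A" using a b subgroup.m_closed[OF AS] by blast
    have "c [^] (idx a + idx b) = a \<otimes> b" using nat_pow_mult[OF cc, of "idx a" "idx b", symmetric] idx[OF a] idx[OF b] by simp
    hence "c [^] idx (a \<otimes> b) = c [^] (idx a + idx b)" using idx[OF ab] by simp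
    hence "e [^] idx (a \<otimes> b) = e [^] (idx a + idx b)" using pow_transfer[OF cc c(2) ec] by blast
    thus "\<psi> (a \<otimes> b) = \<psi> a \<otimes> \<psi> b" unfolding \<psi>_def using nat_pow_mult[OF ec] by simp
  qed
  have pc: "\<forall>a\<in>A. \<forall>n\<in>N. \<psi> a \<otimes> n = n \<otimes> \<psi> a"
    using psiK KZ Nc center_comm unfolding Z_def by blast
  have psi1: "\<psi> \<one> = \<one>"
  proof -
    have "c [^] idx \<one> = c [^] (0::nat)" using idx subgroup.one_closed[OF AS] by simp
    hence "e [^] idx \<one> = e [^] (0::nat)" using pow_transfer[OF cc c(2) ec] by blast
    thus ?thesis unfolding \<psi>_def by simp
  qed
  have fx: "\<forall>d\<in>A \<inter> N. \<psi> d = d" using AN1 psi1 by blast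
  have inj: "\<forall>a\<in>A. \<forall>n\<in>N. \<psi> a \<otimes> n = \<one> \<longrightarrow> a \<otimes> n = \<one>"
  proof (intro ballI impI)
    fix a n assume a: "a \<in> A" and n: "n \<in> N" and e0: "\<psi> a \<otimes> n = \<one>"
    have nc: "n \<in> carrier G" using n Nc by blast
    have kc: "\<psi> a \<in> carrier G" using psiC a by blast
    have "inv n = \<psi> a" using inv_equality[OF e0 nc kc] .
    hence "\<psi> a \<in> N" using subgroup.m_inv_closed[OF NS n] by simp
    hence k1: "\<psi> a = \<one>" using KN1 psiK a by blast
    hence "e [^] idx a = e [^] (0::nat)" unfolding \<psi>_def by simp
    hence "c [^] idx a = c [^] (0::nat)" using pow_transfer[OF ec e1 cc] by blast
    hence "a = \<one>" using idx[OF a] by simp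
    thus "a \<otimes> n = \<one>" using e0 k1 nc by simp
  qed
  obtain \<beta> where \<beta>: "\<beta> \<in> iso G G" "\<forall>n\<in>N. \<beta> n = n" "\<forall>a\<in>A. \<beta> a = \<psi> a"
    using build_iso[OF fin AS NS AN comAN psiC psiH pc fx inj] by blast
  have "\<beta> ` A = K"
  proof
    show "\<beta> ` A \<subseteq> K" using \<beta>(3) psiK by auto
    show "K \<subseteq> \<beta> ` A"
    proof
      fix k assume "k \<in> K"
      then obtain i where i: "k = e [^] (i::nat)" using Kcyc by (auto elim!: cycE)
      have aA: "c [^] i \<in> A" using Acyc cyc_mem by blast
      have "c [^] idx (c [^] i) = c [^] i" using idx[OF aA] .
      hence "e [^] idx (c [^] i) = e [^] i" using pow_transfer[OF cc c(2) ec] by blast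
      hence "\<beta> (c [^] i) = k" using \<beta>(3) aA i unfolding \<psi>_def by simp
      thus "k \<in> \<beta> ` A" using aA by (metis image_eqI)
    qed
  qed
  thus ?thesis using \<beta> KK KZ unfolding N_def Z_def by blast
qed

end

lemma image_fix: "(\<forall>x\<in>H. f x = x) \<Longrightarrow> f ` H = H"
proof -
  assume a: "\<forall>x\<in>H. f x = x"
  have "f ` H = (\<lambda>x. x) ` H" using a by (intro image_cong) auto
  thus ?thesis by simp
qed

context group
begin

lemma cd_iso:
  assumes \<alpha>: "\<alpha> \<in> iso G G" and cd: "central_decomposition G \<H>"
  shows "central_decomposition G ((\<lambda>H. \<alpha> ` H) ` \<H>)"
proof -
  interpret gh: group_hom G G \<alpha>
    by (rule group_hom.intro[OF is_group is_group]) (simp add: group_hom_axioms_def iso_imp_homomorphism[OF \<alpha>])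
  have injA: "inj_on \<alpha> (carrier G)" and surjA: "\<alpha> ` carrier G = carrier G" using \<alpha> by (auto simp: iso_iff)
  have subs: "\<forall>H\<in>\<H>. subgroup H G" using cd_subs[OF cd] .
  have Uc: "\<Union>\<H> \<subseteq> carrier G" using cd_Uc[OF cd] .
  have gimg: "generate G (\<Union>((\<lambda>H. \<alpha> ` H) ` \<J>)) = \<alpha> ` generate G (\<Union>\<J>)" if "\<J> \<subseteq> \<H>" for \<J>
  proof -
    have "\<Union>((\<lambda>H. \<alpha> ` H) ` \<J>) = \<alpha> ` (\<Union>\<J>)" by blast
    moreover have "\<Union>\<J> \<subseteq> carrier G" using that Uc by blast
    ultimately show ?thesis using gh.generate_img by simp
  qed
  show ?thesis unfolding central_decomposition_def
  proof (intro conjI allI impI)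
    show "\<forall>H\<in>(\<lambda>H. \<alpha> ` H) ` \<H>. subgroup H G" using subs gh.subgroup_img_is_subgroup by blast
    show "\<forall>H\<in>(\<lambda>H. \<alpha> ` H) ` \<H>. \<forall>K\<in>(\<lambda>H. \<alpha> ` H) ` \<H>. H \<noteq> K \<longrightarrow> (\<forall>x\<in>H. \<forall>y\<in>K. x \<otimes> y = y \<otimes> x)"
    proof (intro ballI impI)
      fix H' K' x y assume H': "H' \<in> (\<lambda>H. \<alpha> ` H) ` \<H>" and K': "K' \<in> (\<lambda>H. \<alpha> ` H) ` \<H>"
        and ne: "H' \<noteq> K'" and x: "x \<in> H'" and y: "y \<in> K'"
      obtain H K where HK: "H \<in> \<H>" "K \<in> \<H>" "H' = \<alpha> ` H" "K' = \<alpha> ` K" using H' K' by blast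
      obtain a b where ab: "a \<in> H" "b \<in> K" "x = \<alpha> a" "y = \<alpha> b" using x y HK by blast
      have abc: "a \<in> carrier G" "b \<in> carrier G" using ab HK Uc by blast+
      have "K \<noteq> H" using ne HK by blast
      hence "a \<otimes> b = b \<otimes> a" using cd_member_comm[OF cd HK(1) ab(1) HK(2) _ ab(2)] by blast
      thus "x \<otimes> y = y \<otimes> x" using ab abc gh.hom_mult by metis
    qed
    show "generate G (\<Union>((\<lambda>H. \<alpha> ` H) ` \<H>)) = carrier G"
      using gimg[of \<H>] cd_gen[OF cd] surjA by simp
    fix \<J>' assume J': "\<J>' \<subset> (\<lambda>H. \<alpha> ` H) ` \<H>"
    define \<J> where "\<J> = {H\<in>\<H>. \<alpha> ` H \<in> \<J>'}"
    have JH: "\<J> \<subseteq> \<H>" unfolding \<J>_def by blast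
    have JJ: "(\<lambda>H. \<alpha> ` H) ` \<J> = \<J>'" unfolding \<J>_def using J' by blast
    have "\<J> \<noteq> \<H>" using JJ J' by blast
    hence Jp: "\<J> \<subset> \<H>" using JH by blast
    have gne: "generate G (\<Union>\<J>) \<noteq> carrier G" using cd_min[OF cd] Jp by blast
    have gc: "generate G (\<Union>\<J>) \<subseteq> carrier G" using generate_incl JH Uc by blast
    show "generate G (\<Union>\<J>') \<noteq> carrier G"
    proof
      assume "generate G (\<Union>\<J>') = carrier G"
      hence "\<alpha> ` generate G (\<Union>\<J>) = \<alpha> ` carrier G" using gimg[OF JH] JJ surjA by simp
      hence "generate G (\<Union>\<J>) = carrier G" using inj_on_image_eq_iff[OF injA gc] by blast
      thus False using gne by blast
    qed
  qed
qed

end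

context expgroup
begin

lemma exch_induct:
  assumes frH: "fully_refined G \<H>" and frK: "fully_refined G \<K>"
    and img: "(\<lambda>H. H <#> group_center G) ` \<H> = (\<lambda>K. K <#> group_center G) ` \<K>"
    and fJ: "finite \<J>"
  shows "\<J> \<subseteq> \<H> \<longrightarrow> (\<exists>\<alpha>\<in>iso G G. (\<forall>J\<in>\<J>. \<alpha> ` J \<in> \<K> \<and> \<alpha> ` J <#> group_center G = J <#> group_center G)
            \<and> (\<forall>H\<in>\<H> - \<J>. \<forall>x\<in>H. \<alpha> x = x))"
  using fJ
proof (induction \<J> rule: finite_induct)
  case empty
  have "(\<lambda>x. x) \<in> iso G G" by (rule iso_set_refl)
  thus ?case by auto
next
  case (insert H0 \<J>)
  show ?case
  proof
    assume sub: "insert H0 \<J> \<subseteq> \<H>"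
    have cdH: "central_decomposition G \<H>" and indH: "\<forall>H\<in>\<H>. centrally_indecomposable G H"
      using frH unfolding fully_refined_def by auto
    have cdK: "central_decomposition G \<K>" and indK: "\<forall>K\<in>\<K>. centrally_indecomposable G K"
      using frK unfolding fully_refined_def by auto
    obtain \<alpha> where \<alpha>: "\<alpha> \<in> iso G G" "\<forall>J\<in>\<J>. \<alpha> ` J \<in> \<K> \<and> \<alpha> ` J <#> group_center G = J <#> group_center G"
      "\<forall>H\<in>\<H> - \<J>. \<forall>x\<in>H. \<alpha> x = x"
      using insert.IH sub by blast
    have injA: "inj_on \<alpha> (carrier G)" using \<alpha>(1) by (auto simp: iso_iff)
    have Uc: "\<Union>\<H> \<subseteq> carrier G" using cd_Uc[OF cdH] .
    define \<A> where "\<A> = (\<lambda>H. \<alpha> ` H) ` \<H>"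
    have fixH: "\<alpha> ` H = H" if "H \<in> \<H>" "H \<notin> \<J>" for H using \<alpha>(3) that image_fix[of H \<alpha>] by blast
    have cdA: "central_decomposition G \<A>" unfolding \<A>_def using cd_iso[OF \<alpha>(1) cdH] .
    have indA: "\<forall>B\<in>\<A>. centrally_indecomposable G B"
    proof
      fix B assume "B \<in> \<A>"
      then obtain H where H: "H \<in> \<H>" "B = \<alpha> ` H" unfolding \<A>_def by blast
      show "centrally_indecomposable G B"
      proof (cases "H \<in> \<J>")
        case True thus ?thesis using \<alpha>(2) indK H by blast
      next
        case False thus ?thesis using fixH[OF H(1) False] indH H by simp
      qed
    qed
    have zeq: "\<alpha> ` H <#> group_center G = H <#> group_center G" if "H \<in> \<H>" for H
      using \<alpha>(2) fixH that by (cases "H \<in> \<J>") auto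
    have imgA: "(\<lambda>H. H <#> group_center G) ` \<A> = (\<lambda>K. K <#> group_center G) ` \<K>"
    proof -
      have "(\<lambda>H. H <#> group_center G) ` \<A> = (\<lambda>H. \<alpha> ` H <#> group_center G) ` \<H>"
        unfolding \<A>_def by (simp add: image_image)
      also have "\<dots> = (\<lambda>H. H <#> group_center G) ` \<H>" using zeq by (intro image_cong) auto
      finally show ?thesis using img by simp
    qed
    have H0H: "H0 \<in> \<H>" using sub by blast
    have A0: "\<alpha> ` H0 = H0" using fixH[OF H0H insert.hyps(2)] .
    have H0A: "H0 \<in> \<A>" unfolding \<A>_def using H0H A0 by (metis image_eqI)
    have indH0: "centrally_indecomposable G H0" using indH H0H by blast
    define N where "N = generate G (\<Union>(\<A> - {H0}))"
    obtain \<beta> where \<beta>: "\<beta> \<in> iso G G" "\<beta> ` H0 \<in> \<K>" "\<beta> ` H0 <#> group_center G = H0 <#> group_center G"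
      "\<forall>n\<in>N. \<beta> n = n"
    proof (cases "H0 \<subseteq> group_center G")
      case True
      obtain \<beta> where b: "\<beta> \<in> iso G G" "\<beta> ` H0 \<in> \<K>" "\<beta> ` H0 \<subseteq> group_center G" "\<forall>n\<in>N. \<beta> n = n"
        using step_central[OF cdA H0A indH0 True cdK indK imgA indA] unfolding N_def by blast
      have "\<beta> ` H0 <#> group_center G = group_center G"
        using sub_center_eq[OF cd_sub[OF cdK b(2)] b(3)] .
      moreover have "H0 <#> group_center G = group_center G"
        using sub_center_eq[OF cd_sub[OF cdH H0H] True] .
      ultimately show ?thesis using that b by simp
    next
      case False
      have "H0 <#> group_center G \<in> (\<lambda>K. K <#> group_center G) ` \<K>" using imgA H0A by blast
      then obtain K where K: "K \<in> \<K>" "K <#> group_center G = H0 <#> group_center G" by blast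
      obtain \<beta> where b: "\<beta> \<in> iso G G" "\<beta> ` H0 = K" "\<forall>n\<in>N. \<beta> n = n"
        using step_noncentral[OF cdA H0A indH0 False cdK K(1) _ K(2)] indK K(1) unfolding N_def by blast
      show ?thesis using that b K by simp
    qed
    have HN: "B \<subseteq> N" if "B \<in> \<A>" "B \<noteq> H0" for B
      unfolding N_def using that generate.incl[of _ "\<Union>(\<A> - {H0})" G] by blast
    have \<gamma>: "\<beta> \<circ> \<alpha> \<in> iso G G" using iso_set_trans[OF \<alpha>(1) \<beta>(1)] .
    have part1: "\<forall>J\<in>insert H0 \<J>. (\<beta> \<circ> \<alpha>) ` J \<in> \<K> \<and> (\<beta> \<circ> \<alpha>) ` J <#> group_center G = J <#> group_center G"
    proof
      fix J assume J: "J \<in> insert H0 \<J>"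
      have ee: "(\<beta> \<circ> \<alpha>) ` J = \<beta> ` (\<alpha> ` J)" by (simp only: image_comp)
      show "(\<beta> \<circ> \<alpha>) ` J \<in> \<K> \<and> (\<beta> \<circ> \<alpha>) ` J <#> group_center G = J <#> group_center G"
      proof (cases "J = H0")
        case True
        thus ?thesis using \<beta>(2,3) A0 ee by simp
      next
        case False
        hence JJ: "J \<in> \<J>" using J by blast
        have JH: "J \<in> \<H>" using JJ sub by blast
        have aJA: "\<alpha> ` J \<in> \<A>" unfolding \<A>_def using JH by blast
        have "\<alpha> ` J \<noteq> \<alpha> ` H0"
        proof
          assume "\<alpha> ` J = \<alpha> ` H0"
          moreover have "J \<subseteq> carrier G" "H0 \<subseteq> carrier G" using JH H0H Uc by blast+
          ultimately have "J = H0" using inj_on_image_eq_iff[OF injA] by blast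
          thus False using False by blast
        qed
        hence "\<alpha> ` J \<subseteq> N" using HN[OF aJA] A0 by simp
        hence "\<beta> ` (\<alpha> ` J) = \<alpha> ` J" using \<beta>(4) image_fix[of "\<alpha> ` J" \<beta>] by blast
        thus ?thesis using \<alpha>(2) JJ ee by simp
      qed
    qed
    have part2: "\<forall>H\<in>\<H> - insert H0 \<J>. \<forall>x\<in>H. (\<beta> \<circ> \<alpha>) x = x"
    proof (intro ballI)
      fix H x assume H: "H \<in> \<H> - insert H0 \<J>" and x: "x \<in> H"
      have ax: "\<alpha> x = x" using \<alpha>(3) H x by blast
      have HA: "H \<in> \<A>" unfolding \<A>_def using fixH[of H] H by (metis DiffE insertCI image_eqI)
      have "H \<noteq> H0" using H by blast
      hence "x \<in> N" using HN[OF HA] x by blast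
      thus "(\<beta> \<circ> \<alpha>) x = x" using ax \<beta>(4) by simp
    qed
    show "\<exists>\<gamma>\<in>iso G G. (\<forall>J\<in>insert H0 \<J>. \<gamma> ` J \<in> \<K> \<and> \<gamma> ` J <#> group_center G = J <#> group_center G)
            \<and> (\<forall>H\<in>\<H> - insert H0 \<J>. \<forall>x\<in>H. \<gamma> x = x)"
      using \<gamma> part1 part2 by blast
  qed
qed

end

theorem theorem2p8:
  fixes P :: "('a, 'b) monoid_scheme" and p :: nat
    and \<H> \<K> :: "'a set set"
  assumes "Factorial_Ring.prime p" and "odd p"
    and "group P" and "finite (carrier P)"
    and "\<exists>n. card (carrier P) = p ^ n"
    and "nilpotent_class_two P"
    and "has_exponent P p"
    and "fully_refined P \<H>" and "fully_refined P \<K>"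
    and "(\<lambda>H. H <#>\<^bsub>P\<^esub> group_center P) ` \<H> = (\<lambda>K. K <#>\<^bsub>P\<^esub> group_center P) ` \<K>"
  shows "exchangeable P \<H> \<K>"
proof -
  interpret E: expgroup P p
  proof (rule expgroup.intro[OF assms(3)])
    show "expgroup_axioms P p"
      using assms(1,4,7) unfolding expgroup_axioms_def has_exponent_def by blast
  qed
  have cdH: "central_decomposition P \<H>" using assms(8) unfolding fully_refined_def by blast
  have finH: "finite \<H>" using E.cd_finite[OF assms(4) cdH] .
  show ?thesis unfolding exchangeable_def
  proof (intro allI impI)
    fix \<J> assume J: "\<J> \<subseteq> \<H>"
    have finJ: "finite \<J>" using finite_subset[OF J finH] .
    obtain \<alpha> where \<alpha>: "\<alpha> \<in> iso P P" "\<forall>J\<in>\<J>. \<alpha> ` J \<in> \<K> \<and> \<alpha> ` J <#>\<^bsub>P\<^esub> group_center P = J <#>\<^bsub>P\<^esub> group_center P"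
      "\<forall>H\<in>\<H> - \<J>. \<forall>x\<in>H. \<alpha> x = x"
      using E.exch_induct[OF assms(8,9,10) finJ] J by blast
    have "(\<lambda>J. \<alpha> ` J) ` \<J> \<subseteq> \<K>" using \<alpha>(2) by blast
    moreover have "(\<lambda>J. \<alpha> ` J) ` (\<H> - \<J>) = \<H> - \<J>"
    proof -
      have "(\<lambda>J. \<alpha> ` J) ` (\<H> - \<J>) = (\<lambda>J. J) ` (\<H> - \<J>)"
        using \<alpha>(3) image_fix by (intro image_cong) auto
      thus ?thesis by simp
    qed
    ultimately show "\<exists>\<alpha>\<in>iso P P. (\<lambda>J. \<alpha> ` J) ` \<J> \<subseteq> \<K> \<and> (\<lambda>J. \<alpha> ` J) ` (\<H> - \<J>) = \<H> - \<J>"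
      using \<alpha>(1) by blast
  qed
qed

end
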